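(* Let $a>0$, $r>0$, $0<\delta<r$, and let $p\ge 2$ be an integer. For $s\in\mathbb{R}$ and sequences $\mathbf v_k=\{v_{k,n}\}_{n\ge0}\subset\ell^a_e$ ($k=1,2$), define $\mathcal M(s,\mathbf v_1,\mathbf v_2)=\{M_n(s,\mathbf v_1,\mathbf v_2)\}_{n\ge 0}$ by $$M_n(s,\mathbf v_1,\mathbf v_2)=\sum_{n_1=0}^{n}v_{1,n_1}v_{2,n-n_1}+\sum_{n_2\ge0}s^{n_2}v_{1,n+n_2}v_{2,n_2}+\sum_{n_1\ge 1}s^{n_1}v_{1,n_1}v_{2,n+n_1},$$ (products taken pointwise in $j\in\mathbb{Z}$); equivalently, for $s=|z|^2$, $\sum_{n\ge0}(z^n+\bar z^n)M_n=\big(\sum_{n_1\ge0}(z^{n_1}+\bar z^{n_1})v_{1,n_1}\big)\big(\sum_{n_2\ge0}(z^{n_2}+\bar z^{n_2})v_{2,n_2}\big)$. Define inductively $\mathcal M_2=\mathcal M$ and $\mathcal M_k(s,\mathbf v_1,\dots,\mathbf v_k)=\mathcal M_2(s,\mathbf v_1,\mathcal M_{k-1}(s,\mathbf v_2,\dots,\mathbf v_k))$. Then $s\mapsto\mathcal M_p(s,\cdot,\dots,\cdot)$ belongs to $C^\omega(B_{\mathbb{R}}(\delta^2);\mathcal L^p(X_{a,r};X_{a,r}))$, and $$\sup_{z\in B_{\mathbb{C}}(\delta)}\|\mathcal M_p(|z|^2,\cdot,\dots,\cdot)\|_{\mathcal L^p(X_{a,r};X_{a,r})}\lesssim 1.$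$
   Context: $\ell^a_e=\{u:\mathbb{Z}\to\mathbb{R}:\ \|u\|_{\ell^a_e}=(\sum_j e^{2a|j|}|u(j)|^2)^{1/2}<\infty\}$. $X_{a,r}=\{\mathbf v=\{v_n\}_{n\ge0}\subset\ell^a_e:\ \|\mathbf v\|_{a,r}=\sum_{n\ge0}r^n\|v_n\|_{\ell^a_e}<\infty\}$. For Banach spaces $X,Y$, $\mathcal L(X;Y)$ is the space of bounded linear operators, $\mathcal L^1(X;Y)=\mathcal L(X;Y)$ and $\mathcal L^n(X;Y)=\mathcal L(X;\mathcal L^{n-1}(X;Y))$ (bounded $n$-linear maps). $B_{\mathbb{R}}(\rho)=(-\rho,\rho)$, $B_{\mathbb{C}}(\rho)=\{z:|z|<\rho\}$; $C^\omega$ means real analytic. $\lesssim$ means bounded by a constant independent of $z$. *)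

theory Defs
  imports "HOL-Analysis.Analysis"
begin

type_synonym elt = "int \<Rightarrow> real"
type_synonym seqv = "nat \<Rightarrow> int \<Rightarrow> real"

definition in_le :: "real \<Rightarrow> elt \<Rightarrow> bool" where
  "in_le a u \<longleftrightarrow> (\<lambda>j. exp (2 * a * \<bar>real_of_int j\<bar>) * (u j)\<^sup>2) summable_on UNIV"

definition norm_le :: "real \<Rightarrow> elt \<Rightarrow> real" where
  "norm_le a u = sqrt (\<Sum>\<^sub>\<infinity>j. exp (2 * a * \<bar>real_of_int j\<bar>) * (u j)\<^sup>2)"

definition in_X :: "real \<Rightarrow> real \<Rightarrow> seqv \<Rightarrow> bool" where
  "in_X a r v \<longleftrightarrow> (\<forall>n. in_le a (v n)) \<and> summable (\<lambda>n. r ^ n * norm_le a (v n))"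

definition norm_X :: "real \<Rightarrow> real \<Rightarrow> seqv \<Rightarrow> real" where
  "norm_X a r v = (\<Sum>n. r ^ n * norm_le a (v n))"

definition MM :: "real \<Rightarrow> seqv \<Rightarrow> seqv \<Rightarrow> seqv" where
  "MM s v1 v2 = (\<lambda>n j.
      (\<Sum>n1=0..n. v1 n1 j * v2 (n - n1) j)
    + (\<Sum>n2. s ^ n2 * v1 (n + n2) j * v2 n2 j)
    + (\<Sum>k. s ^ (Suc k) * v1 (Suc k) j * v2 (n + Suc k) j))"

text \<open>M_k(s, v1, ..., vk) = M_2(s, v1, M_{k-1}(s, v2, ..., vk)), M_2 = M.
  (The one-element case is the identity so that M_2 [v1,v2] = M v1 v2.)\<close>
fun MMk :: "real \<Rightarrow> seqv list \<Rightarrow> seqv" where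
  "MMk s [] = (\<lambda>n j. 0)"
| "MMk s [v] = v"
| "MMk s (v # vs) = MM s v (MMk s vs)"

definition multilinear_X :: "real \<Rightarrow> real \<Rightarrow> nat \<Rightarrow> (seqv list \<Rightarrow> seqv) \<Rightarrow> bool" where
  "multilinear_X a r p T \<longleftrightarrow>
     (\<forall>vs i x y c. length vs = p \<and> (\<forall>v\<in>set vs. in_X a r v) \<and> i < p \<and> in_X a r x \<and> in_X a r y \<longrightarrow>
        T (vs[i := (\<lambda>n j. c * x n j + y n j)]) = (\<lambda>n j. c * T (vs[i := x]) n j + T (vs[i := y]) n j))"

definition bounded_mlin :: "real \<Rightarrow> real \<Rightarrow> nat \<Rightarrow> (seqv list \<Rightarrow> seqv) \<Rightarrow> bool" where
  "bounded_mlin a r p T \<longleftrightarrow>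
     multilinear_X a r p T \<and>
     (\<forall>vs. length vs = p \<and> (\<forall>v\<in>set vs. in_X a r v) \<longrightarrow> in_X a r (T vs)) \<and>
     (\<exists>C. \<forall>vs. length vs = p \<and> (\<forall>v\<in>set vs. in_X a r v) \<longrightarrow>
          norm_X a r (T vs) \<le> C * (\<Prod>v\<leftarrow>vs. norm_X a r v))"

definition mlnorm :: "real \<Rightarrow> real \<Rightarrow> nat \<Rightarrow> (seqv list \<Rightarrow> seqv) \<Rightarrow> real" where
  "mlnorm a r p T = Inf {C. 0 \<le> C \<and> (\<forall>vs. length vs = p \<and> (\<forall>v\<in>set vs. in_X a r v) \<longrightarrow>
          norm_X a r (T vs) \<le> C * (\<Prod>v\<leftarrow>vs. norm_X a r v))}"

definition analytic_mlin :: "real \<Rightarrow> real \<Rightarrow> nat \<Rightarrow> (real \<Rightarrow> seqv list \<Rightarrow> seqv) \<Rightarrow> real set \<Rightarrow> bool" where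
  "analytic_mlin a r p F S \<longleftrightarrow>
     (\<forall>s\<in>S. bounded_mlin a r p (F s)) \<and>
     (\<forall>s0\<in>S. \<exists>\<rho>>0. \<exists>A :: nat \<Rightarrow> seqv list \<Rightarrow> seqv.
        (\<forall>m. bounded_mlin a r p (A m)) \<and>
        summable (\<lambda>m. mlnorm a r p (A m) * \<rho> ^ m) \<and>
        (\<forall>s\<in>S. \<bar>s - s0\<bar> < \<rho> \<longrightarrow>
           (\<lambda>N. mlnorm a r p (\<lambda>vs n j. F s vs n j - (\<Sum>m<N. (s - s0) ^ m * A m vs n j)))
             \<longlonglongrightarrow> 0))"

end

theory Submission
  imports Defs
begin
lemma DS:
  fixes x y :: "nat \<Rightarrow> nat \<Rightarrow> real"
  assumes xy: "\<And>i k. \<bar>x i k\<bar> \<le> y i k" and ys: "\<And>i. summable (y i)"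
    and yss: "summable (\<lambda>i. suminf (y i))"
  shows "\<exists>T. (\<forall>i. summable (x i)) \<and> (\<forall>k. summable (\<lambda>i. x i k)) \<and>
      (\<lambda>i. suminf (x i)) sums T \<and> (\<lambda>k. \<Sum>i. x i k) sums T \<and>
      (\<lambda>m. \<Sum>i\<le>m. x i (m-i)) sums T"
proof -
  have y0: "\<And>i k. 0 \<le> y i k" using xy by (meson abs_ge_zero order_trans)
  have hy: "(\<lambda>(i,k). y i k) summable_on Sigma UNIV (\<lambda>_. UNIV)"
    apply (rule summable_on_SigmaI[where g="\<lambda>i. suminf (y i)"])
    using sums_nonneg_imp_has_sum[OF summable_sums[OF ys] y0]
      summable_nonneg_imp_summable_on[OF yss] y0 suminf_nonneg[OF ys]
    by auto
  have hxa: "(\<lambda>p. norm ((\<lambda>(i,k). x i k) p)) summable_on Sigma UNIV (\<lambda>_. UNIV)"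
    by (rule summable_on_comparison_test[OF hy]) (use xy in auto)
  have hx: "(\<lambda>(i,k). x i k) summable_on Sigma UNIV (\<lambda>_. UNIV)"
    using hxa summable_on_iff_abs_summable_on_real by blast
  define T where "T = infsum (\<lambda>(i,k). x i k) (Sigma UNIV (\<lambda>_. UNIV))"
  have hT: "((\<lambda>(i,k). x i k) has_sum T) (Sigma UNIV (\<lambda>_. UNIV))"
    using hx T_def by simp
  have row: "\<And>i. x i summable_on UNIV"
    using summable_on_SigmaD1[of x UNIV "\<lambda>_. UNIV"] hx by auto
  have r1: "\<forall>i. summable (x i)" using row summable_on_imp_summable by blast
  have rowsum: "\<And>i. (x i has_sum suminf (x i)) UNIV"
    using row by (metis has_sum_imp_sums has_sum_infsum sums_unique)
  have A1: "(\<lambda>i. suminf (x i)) sums T"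
  proof -
    have "((\<lambda>i. suminf (x i)) has_sum T) UNIV"
      by (rule has_sum_Sigma'[OF hT]) (use rowsum in auto)
    thus ?thesis by (rule has_sum_imp_sums)
  qed
  have hT': "((\<lambda>(k,i). x i k) has_sum T) (Sigma UNIV (\<lambda>_. UNIV))"
    using hT by (subst (asm) has_sum_swap) (simp add: case_prod_unfold)
  have col: "\<And>k. (\<lambda>i. x i k) summable_on UNIV"
    using summable_on_SigmaD1[of "\<lambda>k i. x i k" UNIV "\<lambda>_. UNIV"] hT' summable_on_def
    by (metis (no_types, lifting) UNIV_I case_prod_unfold)
  have r2: "\<forall>k. summable (\<lambda>i. x i k)" using col summable_on_imp_summable by blast
  have colsum: "\<And>k. ((\<lambda>i. x i k) has_sum (\<Sum>i. x i k)) UNIV"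
    using col by (metis has_sum_imp_sums has_sum_infsum sums_unique)
  have A2: "(\<lambda>k. \<Sum>i. x i k) sums T"
  proof -
    have "((\<lambda>k. \<Sum>i. x i k) has_sum T) UNIV"
      by (rule has_sum_Sigma'[OF hT']) (use colsum in auto)
    thus ?thesis by (rule has_sum_imp_sums)
  qed
  have hD: "((\<lambda>(m,i). x i (m-i)) has_sum T) (Sigma UNIV (\<lambda>m. {..m}))"
  proof -
    have "((\<lambda>(m,i). x i (m-i)) has_sum T) (Sigma UNIV (\<lambda>m. {..m})) =
          ((\<lambda>(i,k). x i k) has_sum T) (Sigma UNIV (\<lambda>_. UNIV))"
      by (rule has_sum_reindex_bij_witness[where j="\<lambda>(m,i). (i, m-i)" and i="\<lambda>(i,k). (i+k, i)"]) auto
    thus ?thesis using hT by simp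
  qed
  have A3: "(\<lambda>m. \<Sum>i\<le>m. x i (m-i)) sums T"
  proof -
    have "((\<lambda>m. \<Sum>i\<le>m. x i (m-i)) has_sum T) UNIV"
      by (rule has_sum_Sigma'[OF hD]) auto
    thus ?thesis by (rule has_sum_imp_sums)
  qed
  show ?thesis using r1 r2 A1 A2 A3 by blast
qed

abbreviation W :: "real \<Rightarrow> int \<Rightarrow> real" where
  "W a j \<equiv> exp (2 * a * \<bar>real_of_int j\<bar>)"

lemma le_nonneg: "0 \<le> norm_le a u"
  unfolding norm_le_def by (auto intro!: infsum_nonneg)

lemma le_sq: "(norm_le a u)\<^sup>2 = (\<Sum>\<^sub>\<infinity>j. W a j * (u j)\<^sup>2)"
  unfolding norm_le_def by (simp add: infsum_nonneg)

lemma le_fin: "in_le a u \<Longrightarrow> finite J \<Longrightarrow> (\<Sum>j\<in>J. W a j * (u j)\<^sup>2) \<le> (norm_le a u)\<^sup>2"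
  unfolding le_sq in_le_def by (rule finite_sum_le_infsum) auto

lemma le_closure:
  assumes S: "0 \<le> S" and b: "\<And>J. finite J \<Longrightarrow> (\<Sum>j\<in>J. W a j * (g j)\<^sup>2) \<le> S\<^sup>2"
  shows "in_le a g \<and> norm_le a g \<le> S"
proof -
  have sm: "(\<lambda>j. W a j * (g j)\<^sup>2) summable_on UNIV"
    by (rule nonneg_bdd_above_summable_on) (auto intro!: bdd_aboveI[where M="S\<^sup>2"] b)
  have "(\<Sum>\<^sub>\<infinity>j. W a j * (g j)\<^sup>2) \<le> S\<^sup>2"
    by (rule infsum_le_finite_sums[OF sm]) (use b in auto)
  hence "norm_le a g \<le> sqrt (S\<^sup>2)" unfolding norm_le_def by (rule real_sqrt_le_mono)
  thus ?thesis using sm S unfolding in_le_def by simp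
qed

lemma le_pt:
  assumes a: "0 \<le> a" and u: "in_le a u" shows "\<bar>u j\<bar> \<le> norm_le a u"
proof -
  have "W a j * (u j)\<^sup>2 \<le> (norm_le a u)\<^sup>2" using le_fin[OF u, of "{j}"] by simp
  moreover have "1 \<le> W a j" using a by simp
  ultimately have "(u j)\<^sup>2 \<le> (norm_le a u)\<^sup>2"
  proof -
    have "1 * (u j)\<^sup>2 \<le> W a j * (u j)\<^sup>2" by (rule mult_right_mono[OF \<open>1 \<le> W a j\<close>]) simp
    thus ?thesis using \<open>W a j * (u j)\<^sup>2 \<le> (norm_le a u)\<^sup>2\<close> by linarith
  qed
  hence "sqrt ((u j)\<^sup>2) \<le> sqrt ((norm_le a u)\<^sup>2)" by (rule real_sqrt_le_mono)
  thus ?thesis using le_nonneg[of a u] by simp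
qed

lemma L2_part: "in_le a u \<Longrightarrow> finite J \<Longrightarrow> L2_set (\<lambda>j. sqrt (W a j) * u j) J \<le> norm_le a u"
proof -
  assume u: "in_le a u" and J: "finite J"
  have "L2_set (\<lambda>j. sqrt (W a j) * u j) J = sqrt (\<Sum>j\<in>J. W a j * (u j)\<^sup>2)"
    unfolding L2_set_def by (simp add: power_mult_distrib)
  also have "\<dots> \<le> sqrt ((norm_le a u)\<^sup>2)" by (rule real_sqrt_le_mono[OF le_fin[OF u J]])
  finally show ?thesis using le_nonneg by simp
qed

lemma le_add:
  assumes f: "in_le a f" and g: "in_le a g"
  shows "in_le a (\<lambda>j. f j + g j) \<and> norm_le a (\<lambda>j. f j + g j) \<le> norm_le a f + norm_le a g"
proof (rule le_closure)
  show "0 \<le> norm_le a f + norm_le a g" using le_nonneg by (simp add: add_nonneg_nonneg)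
  fix J :: "int set" assume J: "finite J"
  have "(\<Sum>j\<in>J. W a j * (f j + g j)\<^sup>2) = (L2_set (\<lambda>j. sqrt (W a j) * f j + sqrt (W a j) * g j) J)\<^sup>2"
    unfolding L2_set_def by (simp add: power_mult_distrib sum_nonneg distrib_left[symmetric])
  also have "\<dots> \<le> (L2_set (\<lambda>j. sqrt (W a j) * f j) J + L2_set (\<lambda>j. sqrt (W a j) * g j) J)\<^sup>2"
    by (rule power_mono[OF L2_set_triangle_ineq L2_set_nonneg])
  also have "\<dots> \<le> (norm_le a f + norm_le a g)\<^sup>2"
    by (rule power_mono) (auto intro!: add_mono L2_part f g J add_nonneg_nonneg L2_set_nonneg)
  finally show "(\<Sum>j\<in>J. W a j * (f j + g j)\<^sup>2) \<le> (norm_le a f + norm_le a g)\<^sup>2" .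
qed

lemma le_scale:
  assumes u: "in_le a u"
  shows "in_le a (\<lambda>j. c * u j) \<and> norm_le a (\<lambda>j. c * u j) \<le> \<bar>c\<bar> * norm_le a u"
proof (rule le_closure)
  show "0 \<le> \<bar>c\<bar> * norm_le a u" using le_nonneg by simp
  fix J :: "int set" assume J: "finite J"
  have "(\<Sum>j\<in>J. W a j * (c * u j)\<^sup>2) = c\<^sup>2 * (\<Sum>j\<in>J. W a j * (u j)\<^sup>2)"
    by (simp add: sum_distrib_left power_mult_distrib algebra_simps)
  also have "\<dots> \<le> c\<^sup>2 * (norm_le a u)\<^sup>2" by (rule mult_left_mono[OF le_fin[OF u J]]) simp
  also have "\<dots> = (\<bar>c\<bar> * norm_le a u)\<^sup>2" by (simp add: power_mult_distrib)
  finally show "(\<Sum>j\<in>J. W a j * (c * u j)\<^sup>2) \<le> (\<bar>c\<bar> * norm_le a u)\<^sup>2" .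
qed

lemma le_zero: "in_le a (\<lambda>j. 0) \<and> norm_le a (\<lambda>j. 0) \<le> 0"
  by (rule le_closure) auto

lemma le_sum:
  assumes "finite I" "\<And>i. i \<in> I \<Longrightarrow> in_le a (u i)"
  shows "in_le a (\<lambda>j. \<Sum>i\<in>I. u i j) \<and> norm_le a (\<lambda>j. \<Sum>i\<in>I. u i j) \<le> (\<Sum>i\<in>I. norm_le a (u i))"
  using assms
proof (induction I rule: finite_induct)
  case empty then show ?case using le_zero by simp
next
  case (insert i I)
  hence IH: "in_le a (\<lambda>j. \<Sum>i\<in>I. u i j)" "norm_le a (\<lambda>j. \<Sum>i\<in>I. u i j) \<le> (\<Sum>i\<in>I. norm_le a (u i))"
    by auto
  have ui: "in_le a (u i)" using insert by auto
  show ?case using le_add[OF ui IH(1)] IH(2) insert(1,2) by auto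
qed

lemma le_mult:
  assumes a: "0 \<le> a" and u: "in_le a u" and v: "in_le a v"
  shows "in_le a (\<lambda>j. u j * v j) \<and> norm_le a (\<lambda>j. u j * v j) \<le> norm_le a u * norm_le a v"
proof (rule le_closure)
  show "0 \<le> norm_le a u * norm_le a v" using le_nonneg by simp
  fix J :: "int set" assume J: "finite J"
  have "(\<Sum>j\<in>J. W a j * (u j * v j)\<^sup>2) \<le> (\<Sum>j\<in>J. W a j * (u j)\<^sup>2 * (norm_le a v)\<^sup>2)"
  proof (rule sum_mono)
    fix j
    have "\<bar>v j\<bar>\<^sup>2 \<le> (norm_le a v)\<^sup>2" by (rule power_mono[OF le_pt[OF a v] abs_ge_zero])
    hence "(v j)\<^sup>2 \<le> (norm_le a v)\<^sup>2" by simp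
    thus "W a j * (u j * v j)\<^sup>2 \<le> W a j * (u j)\<^sup>2 * (norm_le a v)\<^sup>2"
      by (simp add: power_mult_distrib mult_left_mono mult.assoc)
  qed
  also have "\<dots> = (\<Sum>j\<in>J. W a j * (u j)\<^sup>2) * (norm_le a v)\<^sup>2" by (simp add: sum_distrib_right)
  also have "\<dots> \<le> (norm_le a u)\<^sup>2 * (norm_le a v)\<^sup>2" by (rule mult_right_mono[OF le_fin[OF u J]]) simp
  finally show "(\<Sum>j\<in>J. W a j * (u j * v j)\<^sup>2) \<le> (norm_le a u * norm_le a v)\<^sup>2"
    by (simp add: power_mult_distrib)
qed

lemma le_lim:
  assumes f: "\<And>K. in_le a (f K)" "\<And>K. norm_le a (f K) \<le> S"
    and lim: "\<And>j. (\<lambda>K. f K j) \<longlonglongrightarrow> g j"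
  shows "in_le a g \<and> norm_le a g \<le> S"
proof (rule le_closure)
  show S0: "0 \<le> S" using f(2)[of 0] le_nonneg order_trans by blast
  fix J :: "int set" assume J: "finite J"
  have "(\<lambda>K. \<Sum>j\<in>J. W a j * (f K j)\<^sup>2) \<longlonglongrightarrow> (\<Sum>j\<in>J. W a j * (g j)\<^sup>2)"
    by (intro tendsto_intros lim)
  moreover have "\<And>K. (\<Sum>j\<in>J. W a j * (f K j)\<^sup>2) \<le> S\<^sup>2"
  proof -
    fix K
    have "(norm_le a (f K))\<^sup>2 \<le> S\<^sup>2" by (rule power_mono[OF f(2) le_nonneg])
    thus "(\<Sum>j\<in>J. W a j * (f K j)\<^sup>2) \<le> S\<^sup>2" using le_fin[OF f(1) J, of K] by linarith
  qed
  ultimately show "(\<Sum>j\<in>J. W a j * (g j)\<^sup>2) \<le> S\<^sup>2"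
    by (intro LIMSEQ_le_const2) auto
qed

lemma le_series:
  assumes a: "0 \<le> a" and u: "\<And>k. in_le a (u k)" and s: "summable (\<lambda>k. norm_le a (u k))"
  shows "(\<forall>j. summable (\<lambda>k. u k j)) \<and> in_le a (\<lambda>j. \<Sum>k. u k j)
     \<and> norm_le a (\<lambda>j. \<Sum>k. u k j) \<le> (\<Sum>k. norm_le a (u k))"
proof -
  have sj: "\<And>j. summable (\<lambda>k. u k j)"
    by (rule summable_comparison_test[OF _ s]) (use le_pt[OF a u] in auto)
  have "in_le a (\<lambda>j. \<Sum>k. u k j) \<and> norm_le a (\<lambda>j. \<Sum>k. u k j) \<le> (\<Sum>k. norm_le a (u k))"
  proof (rule le_lim[where f="\<lambda>K j. \<Sum>k<K. u k j"])
    fix K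
    show "in_le a (\<lambda>j. \<Sum>k<K. u k j)" using le_sum[of "{..<K}" a u] u by auto
    have "norm_le a (\<lambda>j. \<Sum>k<K. u k j) \<le> (\<Sum>k<K. norm_le a (u k))"
      using le_sum[of "{..<K}" a u] u by auto
    also have "\<dots> \<le> (\<Sum>k. norm_le a (u k))"
      by (rule sum_le_suminf[OF s]) (auto simp: le_nonneg)
    finally show "norm_le a (\<lambda>j. \<Sum>k<K. u k j) \<le> (\<Sum>k. norm_le a (u k))" .
  next
    fix j show "(\<lambda>K. \<Sum>k<K. u k j) \<longlonglongrightarrow> (\<Sum>k. u k j)" by (rule summable_LIMSEQ[OF sj])
  qed
  thus ?thesis using sj by blast
qed

lemma X_bound:
  assumes r: "0 < r" and u: "\<And>n. in_le a (u n)" and b: "\<And>n. norm_le a (u n) \<le> b n"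
    and s: "summable (\<lambda>n. r ^ n * b n)"
  shows "in_X a r u \<and> norm_X a r u \<le> (\<Sum>n. r ^ n * b n)"
proof -
  have le: "\<And>n. r ^ n * norm_le a (u n) \<le> r ^ n * b n"
    using b r by (simp add: mult_left_mono)
  have s2: "summable (\<lambda>n. r ^ n * norm_le a (u n))"
    by (rule summable_comparison_test[OF _ s]) (use le r le_nonneg in auto)
  show ?thesis unfolding in_X_def norm_X_def using u s2 suminf_le[OF le s2 s] by auto
qed

lemma X_nonneg: "0 < r \<Longrightarrow> in_X a r u \<Longrightarrow> 0 \<le> norm_X a r u"
  unfolding in_X_def norm_X_def by (auto intro!: suminf_nonneg simp: le_nonneg)

lemma X_pt1: assumes r: "0 < r" and u: "in_X a r u"
  shows "r ^ n * norm_le a (u n) \<le> norm_X a r u"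
proof -
  have "(\<Sum>i\<in>{n}. r ^ i * norm_le a (u i)) \<le> norm_X a r u"
    unfolding norm_X_def using u r by (intro sum_le_suminf) (auto simp: in_X_def le_nonneg)
  thus ?thesis by simp
qed

lemma X_pt2: assumes r: "0 < r" and u: "in_X a r u"
  shows "norm_le a (u n) \<le> norm_X a r u / r ^ n"
  using X_pt1[OF r u, of n] r by (simp add: field_simps)

lemma X_pt3: assumes a: "0 \<le> a" and r: "0 < r" and u: "in_X a r u"
  shows "\<bar>u n j\<bar> \<le> norm_X a r u / r ^ n"
  using le_pt[OF a, of "u n" j] X_pt2[OF r u, of n] u unfolding in_X_def by auto

lemma X_add:
  assumes r: "0 < r" and u: "in_X a r u" and v: "in_X a r v"
  shows "in_X a r (\<lambda>n j. u n j + v n j) \<and> norm_X a r (\<lambda>n j. u n j + v n j) \<le> norm_X a r u + norm_X a r v"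
proof -
  have ul: "\<And>n. in_le a (u n)" and vl: "\<And>n. in_le a (v n)" using u v by (auto simp: in_X_def)
  have us: "summable (\<lambda>n. r ^ n * norm_le a (u n))" and vs: "summable (\<lambda>n. r ^ n * norm_le a (v n))"
    using u v by (auto simp: in_X_def)
  have sm: "summable (\<lambda>n. r ^ n * (norm_le a (u n) + norm_le a (v n)))"
    unfolding distrib_left by (rule summable_add[OF us vs])
  have "in_X a r (\<lambda>n j. u n j + v n j) \<and> norm_X a r (\<lambda>n j. u n j + v n j) \<le>
      (\<Sum>n. r ^ n * (norm_le a (u n) + norm_le a (v n)))"
  proof (rule X_bound[OF r _ _ sm])
    fix n
    show "in_le a (\<lambda>j. u n j + v n j)" using le_add[OF ul vl] by blast
    show "norm_le a (\<lambda>j. u n j + v n j) \<le> norm_le a (u n) + norm_le a (v n)" using le_add[OF ul vl] by blast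
  qed
  moreover have "(\<Sum>n. r ^ n * (norm_le a (u n) + norm_le a (v n))) = norm_X a r u + norm_X a r v"
    unfolding norm_X_def distrib_left by (rule suminf_add[OF us vs, symmetric])
  ultimately show ?thesis by simp
qed

lemma X_scale:
  assumes r: "0 < r" and u: "in_X a r u"
  shows "in_X a r (\<lambda>n j. c * u n j) \<and> norm_X a r (\<lambda>n j. c * u n j) \<le> \<bar>c\<bar> * norm_X a r u"
proof -
  have ul: "\<And>n. in_le a (u n)" using u by (auto simp: in_X_def)
  have us: "summable (\<lambda>n. r ^ n * norm_le a (u n))" using u by (auto simp: in_X_def)
  have eq: "\<And>n. r ^ n * (\<bar>c\<bar> * norm_le a (u n)) = \<bar>c\<bar> * (r ^ n * norm_le a (u n))" by simp
  have sm: "summable (\<lambda>n. r ^ n * (\<bar>c\<bar> * norm_le a (u n)))"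
    unfolding eq by (rule summable_mult[OF us])
  have "in_X a r (\<lambda>n j. c * u n j) \<and> norm_X a r (\<lambda>n j. c * u n j) \<le>
      (\<Sum>n. r ^ n * (\<bar>c\<bar> * norm_le a (u n)))"
  proof (rule X_bound[OF r _ _ sm])
    fix n
    show "in_le a (\<lambda>j. c * u n j)" using le_scale[OF ul] by blast
    show "norm_le a (\<lambda>j. c * u n j) \<le> \<bar>c\<bar> * norm_le a (u n)" using le_scale[OF ul] by blast
  qed
  moreover have "(\<Sum>n. r ^ n * (\<bar>c\<bar> * norm_le a (u n))) = \<bar>c\<bar> * norm_X a r u"
    unfolding norm_X_def eq by (rule suminf_mult[OF us])
  ultimately show ?thesis by simp
qed

lemma X_zero: "0 < r \<Longrightarrow> in_X a r (\<lambda>n j. 0) \<and> norm_X a r (\<lambda>n j. 0) \<le> 0"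
  using X_bound[of r a "\<lambda>n j. 0" "\<lambda>n. 0"] le_zero by auto

lemma X_sum:
  assumes r: "0 < r" and "finite I" "\<And>i. i \<in> I \<Longrightarrow> in_X a r (u i)"
  shows "in_X a r (\<lambda>n j. \<Sum>i\<in>I. u i n j) \<and> norm_X a r (\<lambda>n j. \<Sum>i\<in>I. u i n j) \<le> (\<Sum>i\<in>I. norm_X a r (u i))"
  using assms(2,3)
proof (induction I rule: finite_induct)
  case empty then show ?case using X_zero[OF r] by simp
next
  case (insert i I)
  hence IH: "in_X a r (\<lambda>n j. \<Sum>i\<in>I. u i n j)" "norm_X a r (\<lambda>n j. \<Sum>i\<in>I. u i n j) \<le> (\<Sum>i\<in>I. norm_X a r (u i))"
    by auto
  have ui: "in_X a r (u i)" using insert by auto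
  show ?case using X_add[OF r ui IH(1)] IH(2) insert(1,2) by auto
qed

lemma X_series:
  assumes a: "0 \<le> a" and r: "0 < r" and u: "\<And>k. in_X a r (u k)" and s: "summable (\<lambda>k. norm_X a r (u k))"
  shows "(\<forall>n j. summable (\<lambda>k. u k n j)) \<and> in_X a r (\<lambda>n j. \<Sum>k. u k n j)
     \<and> norm_X a r (\<lambda>n j. \<Sum>k. u k n j) \<le> (\<Sum>k. norm_X a r (u k))"
proof -
  have uk: "\<And>k n. in_le a (u k n)" using u by (auto simp: in_X_def)
  have sn: "\<And>n. summable (\<lambda>k. norm_le a (u k n))"
  proof -
    fix n
    have "summable (\<lambda>k. norm_X a r (u k) / r ^ n)" using s by (rule summable_divide)
    thus "summable (\<lambda>k. norm_le a (u k n))"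
      by (rule summable_comparison_test[rotated]) (use X_pt2[OF r u] le_nonneg in auto)
  qed
  note L = le_series[OF a uk sn]
  obtain T where T: "\<forall>i. summable (\<lambda>n. r ^ n * norm_le a (u i n))"
      "\<forall>n. summable (\<lambda>i. r ^ n * norm_le a (u i n))"
      "(\<lambda>i. \<Sum>n. r ^ n * norm_le a (u i n)) sums T"
      "(\<lambda>n. \<Sum>i. r ^ n * norm_le a (u i n)) sums T"
    using DS[of "\<lambda>i n. r ^ n * norm_le a (u i n)" "\<lambda>i n. r ^ n * norm_le a (u i n)"] s u r
    by (auto simp: norm_X_def in_X_def le_nonneg)
  have T1: "(\<Sum>k. norm_X a r (u k)) = T" using T(3) by (simp add: norm_X_def sums_iff)
  have T2: "(\<lambda>n. r ^ n * (\<Sum>k. norm_le a (u k n))) sums T"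
    using T(4) by (simp add: suminf_mult sn)
  have "in_X a r (\<lambda>n j. \<Sum>k. u k n j) \<and> norm_X a r (\<lambda>n j. \<Sum>k. u k n j) \<le> (\<Sum>n. r ^ n * (\<Sum>k. norm_le a (u k n)))"
    by (rule X_bound[OF r]) (use L T2 sums_summable in auto)
  moreover have "(\<Sum>n. r ^ n * (\<Sum>k. norm_le a (u k n))) = T" using T2 by (rule sums_unique[symmetric])
  ultimately show ?thesis using L T1 by simp
qed

definition PP :: "seqv \<Rightarrow> seqv \<Rightarrow> seqv" where
  "PP v w = (\<lambda>n j. \<Sum>n1=0..n. v n1 j * w (n - n1) j)"
definition QQ :: "nat \<Rightarrow> seqv \<Rightarrow> seqv \<Rightarrow> seqv" where
  "QQ c v w = (\<lambda>n j. v (n + c) j * w c j)"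
definition RR :: "nat \<Rightarrow> seqv \<Rightarrow> seqv \<Rightarrow> seqv" where
  "RR c v w = (\<lambda>n j. v c j * w (n + c) j)"

definition DD :: "nat \<Rightarrow> seqv \<Rightarrow> seqv \<Rightarrow> seqv" where
  "DD c v w = (\<lambda>n j. (if c = 0 then (\<Sum>n1=0..n. v n1 j * w (n - n1) j) else 0)
      + v (n + c) j * w c j + (if c = 0 then 0 else v c j * w (n + c) j))"

lemma nX_shift:
  assumes r: "0 < r" and v: "in_X a r v"
  shows "summable (\<lambda>n. r ^ (n + c) * norm_le a (v (n + c)))"
    "(\<Sum>n. r ^ (n + c) * norm_le a (v (n + c))) \<le> norm_X a r v"
proof -
  have s: "summable (\<lambda>n. r ^ n * norm_le a (v n))" using v by (simp add: in_X_def)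
  show "summable (\<lambda>n. r ^ (n + c) * norm_le a (v (n + c)))"
    using summable_ignore_initial_segment[OF s, of c] .
  have "0 \<le> (\<Sum>i<c. r ^ i * norm_le a (v i))" using r by (auto intro!: sum_nonneg simp: le_nonneg)
  thus "(\<Sum>n. r ^ (n + c) * norm_le a (v (n + c))) \<le> norm_X a r v"
    unfolding norm_X_def using suminf_split_initial_segment[OF s, of c] by linarith
qed

lemma PP_bound:
  assumes a: "0 \<le> a" and r: "0 < r" and v: "in_X a r v" and w: "in_X a r w"
  shows "in_X a r (PP v w) \<and> norm_X a r (PP v w) \<le> norm_X a r v * norm_X a r w"
proof -
  have vl: "\<And>n. in_le a (v n)" and wl: "\<And>n. in_le a (w n)" using v w by (auto simp: in_X_def)
  define b where "b n = (\<Sum>n1=0..n. norm_le a (v n1) * norm_le a (w (n - n1)))" for n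
  have pl: "\<And>n. in_le a (PP v w n) \<and> norm_le a (PP v w n) \<le> b n"
  proof -
    fix n
    have M: "\<And>i. in_le a (\<lambda>j. v i j * w (n - i) j) \<and> norm_le a (\<lambda>j. v i j * w (n - i) j) \<le> norm_le a (v i) * norm_le a (w (n - i))"
      by (rule le_mult[OF a vl wl])
    have S: "in_le a (\<lambda>j. \<Sum>i=0..n. v i j * w (n - i) j) \<and> norm_le a (\<lambda>j. \<Sum>i=0..n. v i j * w (n - i) j) \<le> (\<Sum>i=0..n. norm_le a (\<lambda>j. v i j * w (n - i) j))"
      by (rule le_sum) (use M in auto)
    have "(\<Sum>i=0..n. norm_le a (\<lambda>j. v i j * w (n - i) j)) \<le> b n"
      unfolding b_def by (rule sum_mono) (use M in blast)
    thus "in_le a (PP v w n) \<and> norm_le a (PP v w n) \<le> b n" using S unfolding PP_def by auto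
  qed
  define f where "f i = r ^ i * norm_le a (v i)" for i
  define g where "g i = r ^ i * norm_le a (w i)" for i
  have fs: "summable (\<lambda>k. norm (f k))" using v r by (simp add: f_def in_X_def le_nonneg abs_mult)
  have gs: "summable (\<lambda>k. norm (g k))" using w r by (simp add: g_def in_X_def le_nonneg abs_mult)
  have eq: "\<And>n. r ^ n * b n = (\<Sum>i\<le>n. f i * g (n - i))"
  proof -
    fix n
    have "r ^ n * b n = (\<Sum>i=0..n. r ^ n * (norm_le a (v i) * norm_le a (w (n - i))))"
      unfolding b_def by (simp add: sum_distrib_left)
    also have "\<dots> = (\<Sum>i=0..n. f i * g (n - i))"
    proof (rule sum.cong[OF refl])
      fix i assume "i \<in> {0..n}"
      hence "r ^ n = r ^ i * r ^ (n - i)" by (simp add: power_add[symmetric])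
      thus "r ^ n * (norm_le a (v i) * norm_le a (w (n - i))) = f i * g (n - i)"
        by (simp add: f_def g_def)
    qed
    finally show "r ^ n * b n = (\<Sum>i\<le>n. f i * g (n - i))" by (simp add: atLeast0AtMost)
  qed
  have cp: "(\<lambda>n. r ^ n * b n) sums (norm_X a r v * norm_X a r w)"
    unfolding eq norm_X_def using Cauchy_product_sums[OF fs gs] by (simp add: f_def g_def)
  show ?thesis
    using X_bound[OF r, of a "PP v w" b] pl cp sums_summable sums_unique by metis
qed

lemma QQ_bound:
  assumes a: "0 \<le> a" and r: "0 < r" and v: "in_X a r v" and w: "in_X a r w"
  shows "in_X a r (QQ c v w) \<and> norm_X a r (QQ c v w) \<le> (1 / r\<^sup>2) ^ c * (norm_X a r v * norm_X a r w)"
proof -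
  have vl: "\<And>n. in_le a (v n)" and wl: "\<And>n. in_le a (w n)" using v w by (auto simp: in_X_def)
  define K where "K = norm_X a r w / r ^ c / r ^ c"
  define b where "b n = norm_le a (v (n + c)) * (norm_X a r w / r ^ c)" for n
  have pl: "\<And>n. in_le a (QQ c v w n) \<and> norm_le a (QQ c v w n) \<le> b n"
  proof -
    fix n
    have M: "in_le a (\<lambda>j. v (n + c) j * w c j) \<and> norm_le a (\<lambda>j. v (n + c) j * w c j) \<le> norm_le a (v (n + c)) * norm_le a (w c)"
      by (rule le_mult[OF a vl wl])
    have "norm_le a (v (n + c)) * norm_le a (w c) \<le> b n"
      unfolding b_def by (rule mult_left_mono[OF X_pt2[OF r w] le_nonneg])
    thus "in_le a (QQ c v w n) \<and> norm_le a (QQ c v w n) \<le> b n" using M unfolding QQ_def by auto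
  qed
  have eq: "\<And>n. r ^ n * b n = K * (r ^ (n + c) * norm_le a (v (n + c)))"
    unfolding b_def K_def using r by (simp add: power_add field_simps)
  have sm: "summable (\<lambda>n. r ^ n * b n)" unfolding eq by (rule summable_mult[OF nX_shift(1)[OF r v]])
  have K0: "0 \<le> K" unfolding K_def using X_nonneg[OF r w] r by simp
  have "(\<Sum>n. r ^ n * b n) = K * (\<Sum>n. r ^ (n + c) * norm_le a (v (n + c)))"
    unfolding eq by (rule suminf_mult[OF nX_shift(1)[OF r v]])
  also have "\<dots> \<le> K * norm_X a r v" by (rule mult_left_mono[OF nX_shift(2)[OF r v] K0])
  also have "\<dots> = (1 / r\<^sup>2) ^ c * (norm_X a r v * norm_X a r w)"
    unfolding K_def using r by (simp add: power_divide power_mult[symmetric] field_simps power2_eq_square power_mult_distrib)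
  finally show ?thesis using X_bound[OF r, of a "QQ c v w" b] pl sm by auto
qed

lemma RR_bound:
  assumes a: "0 \<le> a" and r: "0 < r" and v: "in_X a r v" and w: "in_X a r w"
  shows "in_X a r (RR c v w) \<and> norm_X a r (RR c v w) \<le> (1 / r\<^sup>2) ^ c * (norm_X a r v * norm_X a r w)"
proof -
  have "RR c v w = (\<lambda>n j. c' * 0 + QQ c w v n j)" if "c' = 0" for c'
    unfolding RR_def QQ_def by (auto simp: mult.commute)
  hence "RR c v w = QQ c w v" by auto
  thus ?thesis using QQ_bound[OF a r w v, of c] by (simp add: mult.commute)
qed

lemma DD_split0: "DD 0 v w = (\<lambda>n j. PP v w n j + QQ 0 v w n j)"
  unfolding DD_def PP_def QQ_def by simp
lemma DD_splitS: "c \<noteq> 0 \<Longrightarrow> DD c v w = (\<lambda>n j. QQ c v w n j + RR c v w n j)"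
  unfolding DD_def RR_def QQ_def by simp

lemma DD_bound:
  assumes a: "0 \<le> a" and r: "0 < r" and v: "in_X a r v" and w: "in_X a r w"
  shows "in_X a r (DD c v w) \<and> norm_X a r (DD c v w) \<le> 2 * (1 / r\<^sup>2) ^ c * (norm_X a r v * norm_X a r w)"
proof (cases "c = 0")
  case True
  have P: "in_X a r (PP v w) \<and> norm_X a r (PP v w) \<le> norm_X a r v * norm_X a r w" by (rule PP_bound[OF a r v w])
  have Q: "in_X a r (QQ 0 v w) \<and> norm_X a r (QQ 0 v w) \<le> (1 / r\<^sup>2) ^ 0 * (norm_X a r v * norm_X a r w)" by (rule QQ_bound[OF a r v w])
  show ?thesis using X_add[OF r, of a "PP v w" "QQ 0 v w"] P Q unfolding True DD_split0 by auto
next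
  case False
  have Q: "in_X a r (QQ c v w) \<and> norm_X a r (QQ c v w) \<le> (1 / r\<^sup>2) ^ c * (norm_X a r v * norm_X a r w)" by (rule QQ_bound[OF a r v w])
  have R: "in_X a r (RR c v w) \<and> norm_X a r (RR c v w) \<le> (1 / r\<^sup>2) ^ c * (norm_X a r v * norm_X a r w)" by (rule RR_bound[OF a r v w])
  show ?thesis using X_add[OF r, of a "QQ c v w" "RR c v w"] Q R False unfolding DD_splitS[OF False] by auto
qed

lemma DD_lin1: "DD c (\<lambda>n j. k * x n j + y n j) w = (\<lambda>n j. k * DD c x w n j + DD c y w n j)"
  unfolding DD_def by (auto simp: algebra_simps sum.distrib sum_distrib_left intro!: ext)

lemma DD_lin2: "DD c v (\<lambda>n j. k * x n j + y n j) = (\<lambda>n j. k * DD c v x n j + DD c v y n j)"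
  unfolding DD_def by (auto simp: algebra_simps sum.distrib sum_distrib_left intro!: ext)

lemma MM_expand:
  assumes a: "0 \<le> a" and r: "0 < r" and v: "in_X a r v" and w: "in_X a r w" and s: "\<bar>s\<bar> < r\<^sup>2"
  shows "(\<lambda>c. s ^ c * DD c v w n j) sums MM s v w n j"
proof -
  define A where "A = (\<Sum>n1=0..n. v n1 j * w (n - n1) j)"
  define t2 where "t2 c = s ^ c * v (n + c) j * w c j" for c
  define t3 where "t3 k = s ^ Suc k * v (Suc k) j * w (n + Suc k) j" for k
  define t3' where "t3' c = (if c = 0 then 0 else s ^ c * v c j * w (n + c) j)" for c
  define q where "q = \<bar>s\<bar> / r\<^sup>2"
  have q: "norm q < 1" using s r by (simp add: q_def)
  define C where "C = norm_X a r v * norm_X a r w / r ^ n"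
  have vb: "\<And>m. \<bar>v m j\<bar> \<le> norm_X a r v / r ^ m" by (rule X_pt3[OF a r v])
  have wb: "\<And>m. \<bar>w m j\<bar> \<le> norm_X a r w / r ^ m" by (rule X_pt3[OF a r w])
  have nv: "0 \<le> norm_X a r v" "0 \<le> norm_X a r w" using X_nonneg[OF r] v w by auto
  have gb: "\<And>m c. \<bar>s ^ c * v m j * w (n + c) j\<bar> \<le> \<bar>s\<bar> ^ c * (norm_X a r v / r ^ m) * (norm_X a r w / r ^ (n + c))"
  proof -
    fix m c
    have "\<bar>v m j\<bar> * \<bar>w (n + c) j\<bar> \<le> (norm_X a r v / r ^ m) * (norm_X a r w / r ^ (n + c))"
      by (rule mult_mono[OF vb wb]) (use nv r in auto)
    hence "\<bar>s\<bar> ^ c * (\<bar>v m j\<bar> * \<bar>w (n + c) j\<bar>) \<le> \<bar>s\<bar> ^ c * ((norm_X a r v / r ^ m) * (norm_X a r w / r ^ (n + c)))"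
      by (rule mult_left_mono) simp
    thus "\<bar>s ^ c * v m j * w (n + c) j\<bar> \<le> \<bar>s\<bar> ^ c * (norm_X a r v / r ^ m) * (norm_X a r w / r ^ (n + c))"
      by (simp add: abs_mult power_abs mult.assoc)
  qed
  have gb2: "\<And>c. \<bar>s ^ c * v (n + c) j * w c j\<bar> \<le> \<bar>s\<bar> ^ c * (norm_X a r v / r ^ (n + c)) * (norm_X a r w / r ^ c)"
  proof -
    fix c
    have "\<bar>v (n + c) j\<bar> * \<bar>w c j\<bar> \<le> (norm_X a r v / r ^ (n + c)) * (norm_X a r w / r ^ c)"
      by (rule mult_mono[OF vb wb]) (use nv r in auto)
    hence "\<bar>s\<bar> ^ c * (\<bar>v (n + c) j\<bar> * \<bar>w c j\<bar>) \<le> \<bar>s\<bar> ^ c * ((norm_X a r v / r ^ (n + c)) * (norm_X a r w / r ^ c))"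
      by (rule mult_left_mono) simp
    thus "\<bar>s ^ c * v (n + c) j * w c j\<bar> \<le> \<bar>s\<bar> ^ c * (norm_X a r v / r ^ (n + c)) * (norm_X a r w / r ^ c)"
      by (simp add: abs_mult power_abs mult.assoc)
  qed
  have e1: "\<And>c. \<bar>s\<bar> ^ c * (norm_X a r v / r ^ (n + c)) * (norm_X a r w / r ^ c) = C * q ^ c"
    unfolding C_def q_def using r by (simp add: power_add power_divide field_simps power2_eq_square power_mult_distrib)
  have geo: "summable (\<lambda>c. C * q ^ c)" by (rule summable_mult[OF summable_geometric[OF q]])
  have s2: "summable t2"
    by (rule summable_comparison_test[OF _ geo]) (use gb2 e1 in \<open>auto simp: t2_def\<close>)
  have e3: "\<And>k. \<bar>s\<bar> ^ Suc k * (norm_X a r v / r ^ Suc k) * (norm_X a r w / r ^ (n + Suc k)) = C * q ^ Suc k"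
    unfolding C_def q_def using r by (simp add: power_add power_divide field_simps power2_eq_square power_mult_distrib)
  have geo3: "summable (\<lambda>k. C * q ^ Suc k)" using summable_ignore_initial_segment[OF geo, of 1] by simp
  have t3b: "\<And>k. norm (t3 k) \<le> C * q ^ Suc k"
  proof -
    fix k
    have "\<bar>t3 k\<bar> \<le> \<bar>s\<bar> ^ Suc k * (norm_X a r v / r ^ Suc k) * (norm_X a r w / r ^ (n + Suc k))"
      unfolding t3_def by (rule gb)
    thus "norm (t3 k) \<le> C * q ^ Suc k" using e3[of k] by simp
  qed
  have s3: "summable t3" by (rule summable_comparison_test'[OF geo3 t3b])
  have S1: "(\<lambda>c. if c = 0 then A else 0) sums A" using sums_single[of 0 "\<lambda>_. A"] by simp
  have S3: "t3' sums suminf t3"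
  proof -
    have e: "(\<lambda>k. t3' (Suc k)) = t3" by (rule ext) (simp add: t3'_def t3_def)
    have "(\<lambda>k. t3' (Suc k)) sums suminf t3" unfolding e by (rule summable_sums[OF s3])
    thus ?thesis by (subst (asm) sums_Suc_iff) (simp add: t3'_def)
  qed
  have S: "(\<lambda>c. (if c = 0 then A else 0) + t2 c + t3' c) sums (A + suminf t2 + suminf t3)"
    by (intro sums_add S1 summable_sums[OF s2] S3)
  have "MM s v w n j = A + suminf t2 + suminf t3" unfolding MM_def A_def t2_def t3_def by simp
  moreover have "\<And>c. s ^ c * DD c v w n j = (if c = 0 then A else 0) + t2 c + t3' c"
    unfolding DD_def A_def t2_def t3'_def by (simp add: algebra_simps)
  ultimately show ?thesis using S by simp
qed

lemma series_X:
  assumes a: "0 \<le> a" and r: "0 < r" and t: "0 < \<tau>" and K: "0 \<le> K" and P: "0 \<le> P" and s: "\<bar>s\<bar> < \<tau>"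
    and B: "\<And>k. in_X a r (B k)" and Bb: "\<And>k. norm_X a r (B k) \<le> K * (1 / \<tau>) ^ k * P"
    and F: "\<And>n j. (\<lambda>k. s ^ k * B k n j) sums F n j"
  shows "in_X a r F \<and> norm_X a r F \<le> K * P / (1 - \<bar>s\<bar> / \<tau>)"
proof -
  define u where "u k = (\<lambda>n j. s ^ k * B k n j)" for k
  define q where "q = \<bar>s\<bar> / \<tau>"
  have q: "0 \<le> q" "q < 1" using s t by (auto simp: q_def)
  have uX: "\<And>k. in_X a r (u k) \<and> norm_X a r (u k) \<le> \<bar>s ^ k\<bar> * norm_X a r (B k)"
    unfolding u_def by (rule X_scale[OF r B])
  have ub: "\<And>k. norm (norm_X a r (u k)) \<le> K * P * q ^ k"
  proof -
    fix k
    have "norm_X a r (u k) \<le> \<bar>s\<bar> ^ k * (K * (1 / \<tau>) ^ k * P)"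
      using uX[of k] mult_left_mono[OF Bb[of k], of "\<bar>s\<bar>^k"] by (simp add: power_abs)
    also have "\<dots> = K * P * q ^ k" by (simp add: q_def power_divide field_simps)
    finally show "norm (norm_X a r (u k)) \<le> K * P * q ^ k" using X_nonneg[OF r] uX by simp
  qed
  have gs: "summable (\<lambda>k. K * P * q ^ k)" using q by (intro summable_mult summable_geometric) simp
  have us: "summable (\<lambda>k. norm_X a r (u k))" by (rule summable_comparison_test'[OF gs ub])
  note L = X_series[OF a r _ us] uX
  have Feq: "(\<lambda>n j. \<Sum>k. u k n j) = F" using F by (auto simp: u_def sums_iff intro!: ext)
  have "(\<Sum>k. norm_X a r (u k)) \<le> (\<Sum>k. K * P * q ^ k)"
  proof (rule suminf_le[OF _ us gs])
    fix k show "norm_X a r (u k) \<le> K * P * q ^ k" using ub[of k] by (simp add: abs_le_iff)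
  qed
  also have "\<dots> = K * P / (1 - \<bar>s\<bar> / \<tau>)" using q by (simp add: suminf_mult suminf_geometric q_def)
  finally show ?thesis using L Feq by auto
qed

lemma geo_le: fixes q :: real assumes "0 \<le> q" "q < 1" shows "(\<Sum>c\<le>m. q ^ c) \<le> 1 / (1 - q)"
proof -
  have "(\<Sum>c\<le>m. q ^ c) \<le> (\<Sum>c. q ^ c)"
    by (rule sum_le_suminf) (use assms in \<open>auto intro: summable_geometric\<close>)
  thus ?thesis using assms by (simp add: suminf_geometric)
qed

fun BB :: "nat \<Rightarrow> seqv list \<Rightarrow> seqv" where
  "BB k [] = (\<lambda>n j. 0)"
| "BB k [v] = (if k = 0 then v else (\<lambda>n j. 0))"
| "BB k (v # v' # vs) = (\<lambda>n j. \<Sum>c\<le>k. DD c v (BB (k - c) (v' # vs)) n j)"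

lemma BB_cons: "ws \<noteq> [] \<Longrightarrow> BB k (v # ws) = (\<lambda>n j. \<Sum>c\<le>k. DD c v (BB (k - c) ws) n j)"
  by (cases ws) auto

lemma MMk_cons: "ws \<noteq> [] \<Longrightarrow> MMk s (v # ws) = MM s v (MMk s ws)"
  by (cases ws) auto

lemma BB_bound:
  assumes a: "0 \<le> a" and r: "0 < r" and t: "0 < \<tau>" "\<tau> < r\<^sup>2"
  shows "\<exists>K\<ge>0. \<forall>ws. length ws = Suc q \<and> (\<forall>v\<in>set ws. in_X a r v) \<longrightarrow>
     (\<forall>k. in_X a r (BB k ws) \<and> norm_X a r (BB k ws) \<le> K * (1 / \<tau>) ^ k * (\<Prod>v\<leftarrow>ws. norm_X a r v))"
proof (induction q)
  case 0
  show ?case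
  proof (intro exI[of _ 1] conjI allI impI)
    fix ws :: "seqv list" and k assume h: "length ws = Suc 0 \<and> (\<forall>v\<in>set ws. in_X a r v)"
    then obtain v where ws: "ws = [v]" by (cases ws) auto
    have v: "in_X a r v" using h ws by auto
    show "in_X a r (BB k ws)" using v X_zero[OF r] ws by auto
    show "norm_X a r (BB k ws) \<le> 1 * (1 / \<tau>) ^ k * (\<Prod>v\<leftarrow>ws. norm_X a r v)"
    proof (cases "k = 0")
      case True thus ?thesis using ws by simp
    next
      case False
      have "0 \<le> (1 / \<tau>) ^ k * norm_X a r v" using X_nonneg[OF r v] t by simp
      thus ?thesis using ws False X_zero[OF r, of a] by auto
    qed
  qed simp
next
  case (Suc q)
  then obtain K where K: "0 \<le> K" and HK: "\<And>ws. length ws = Suc q \<Longrightarrow> (\<forall>v\<in>set ws. in_X a r v) \<Longrightarrow>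
     (\<forall>k. in_X a r (BB k ws) \<and> norm_X a r (BB k ws) \<le> K * (1 / \<tau>) ^ k * (\<Prod>v\<leftarrow>ws. norm_X a r v))"
    by blast
  define \<theta> where "\<theta> = \<tau> / r\<^sup>2"
  have th: "0 \<le> \<theta>" "\<theta> < 1" using t r by (auto simp: \<theta>_def)
  define K' where "K' = 2 * K / (1 - \<theta>)"
  show ?case
  proof (intro exI[of _ K'] conjI allI impI)
    show "0 \<le> K'" using K th by (simp add: K'_def)
    fix ws :: "seqv list" and k assume h: "length ws = Suc (Suc q) \<and> (\<forall>v\<in>set ws. in_X a r v)"
    then obtain v rest where ws: "ws = v # rest" and lr: "length rest = Suc q" by (cases ws) auto
    have v: "in_X a r v" and vr: "\<forall>v\<in>set rest. in_X a r v" using h ws by auto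
    have ne: "rest \<noteq> []" using lr by auto
    define Pr where "Pr = (\<Prod>v\<leftarrow>rest. norm_X a r v)"
    have Pr0: "0 \<le> Pr" unfolding Pr_def using vr X_nonneg[OF r] by (auto intro!: prod_list_nonneg)
    have nv: "0 \<le> norm_X a r v" using X_nonneg[OF r v] .
    have IH: "\<And>m. in_X a r (BB m rest) \<and> norm_X a r (BB m rest) \<le> K * (1 / \<tau>) ^ m * Pr"
      using HK[OF lr vr] Pr_def by auto
    have Dc: "in_X a r (DD c v (BB (k - c) rest)) \<and>
        norm_X a r (DD c v (BB (k - c) rest)) \<le> 2 * K * norm_X a r v * Pr * (1 / \<tau>) ^ k * \<theta> ^ c"
      if "c \<le> k" for c
    proof -
      have D: "in_X a r (DD c v (BB (k - c) rest)) \<and> norm_X a r (DD c v (BB (k - c) rest))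
          \<le> 2 * (1 / r\<^sup>2) ^ c * (norm_X a r v * norm_X a r (BB (k - c) rest))"
        using DD_bound[OF a r v] IH by blast
      have "2 * (1 / r\<^sup>2) ^ c * (norm_X a r v * norm_X a r (BB (k - c) rest))
           \<le> 2 * (1 / r\<^sup>2) ^ c * (norm_X a r v * (K * (1 / \<tau>) ^ (k - c) * Pr))"
        using IH[of "k-c"] nv by (intro mult_left_mono) auto
      also have "\<dots> = 2 * K * norm_X a r v * Pr * (1 / \<tau>) ^ k * \<theta> ^ c"
      proof -
        have "(1 / \<tau>) ^ k = (1 / \<tau>) ^ c * (1 / \<tau>) ^ (k - c)" using that by (simp add: power_add[symmetric])
        thus ?thesis using t r by (simp add: \<theta>_def power_divide field_simps)
      qed
      finally show "in_X a r (DD c v (BB (k - c) rest)) \<and>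
        norm_X a r (DD c v (BB (k - c) rest)) \<le> 2 * K * norm_X a r v * Pr * (1 / \<tau>) ^ k * \<theta> ^ c"
        using D by simp
    qed
    have S: "in_X a r (\<lambda>n j. \<Sum>c\<le>k. DD c v (BB (k - c) rest) n j) \<and>
        norm_X a r (\<lambda>n j. \<Sum>c\<le>k. DD c v (BB (k - c) rest) n j) \<le> (\<Sum>c\<le>k. norm_X a r (DD c v (BB (k - c) rest)))"
      by (rule X_sum[OF r]) (use Dc in auto)
    have "(\<Sum>c\<le>k. norm_X a r (DD c v (BB (k - c) rest))) \<le> (\<Sum>c\<le>k. 2 * K * norm_X a r v * Pr * (1 / \<tau>) ^ k * \<theta> ^ c)"
      by (rule sum_mono) (use Dc in auto)
    also have "\<dots> = 2 * K * norm_X a r v * Pr * (1 / \<tau>) ^ k * (\<Sum>c\<le>k. \<theta> ^ c)"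
      by (simp add: sum_distrib_left)
    also have "\<dots> \<le> 2 * K * norm_X a r v * Pr * (1 / \<tau>) ^ k * (1 / (1 - \<theta>))"
      by (rule mult_left_mono[OF geo_le[OF th]]) (use K nv Pr0 t in auto)
    also have "\<dots> = K' * (1 / \<tau>) ^ k * (\<Prod>v\<leftarrow>ws. norm_X a r v)"
      using th by (simp add: K'_def ws Pr_def)
    finally show "in_X a r (BB k ws)" "norm_X a r (BB k ws) \<le> K' * (1 / \<tau>) ^ k * (\<Prod>v\<leftarrow>ws. norm_X a r v)"
      using S unfolding ws BB_cons[OF ne] by auto
  qed
qed

lemma DD_sums2:
  assumes "\<And>m. (\<lambda>k. f k m j) sums g m j"
  shows "(\<lambda>k. DD c v (f k) n j) sums DD c v g n j"
proof (cases "c = 0")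
  case True
  thus ?thesis unfolding DD_def by (simp, intro sums_add sums_sum sums_mult assms)
next
  case False
  thus ?thesis unfolding DD_def by (simp, intro sums_add sums_sum sums_mult assms)
qed

lemma DD_scale2: "DD c v (\<lambda>m j. t * f m j) n j = t * DD c v f n j"
  unfolding DD_def by (simp add: algebra_simps sum_distrib_left)

lemma BB_rep:
  assumes a: "0 \<le> a" and r: "0 < r" and t: "0 < \<tau>" "\<tau> < r\<^sup>2" and s: "\<bar>s\<bar> < \<tau>"
  shows "vs \<noteq> [] \<Longrightarrow> (\<forall>v\<in>set vs. in_X a r v) \<Longrightarrow> (\<lambda>k. s ^ k * BB k vs n j) sums MMk s vs n j"
proof (induction vs arbitrary: n j)
  case Nil thus ?case by simp
next
  case (Cons v vs)
  show ?case
  proof (cases "vs = []")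
    case True
    have "(\<lambda>k. s ^ k * BB k [v] n j) = (\<lambda>k. if k = 0 then v n j else 0)" by (auto intro!: ext)
    then show ?thesis using sums_single[of 0 "\<lambda>_. v n j"] True by simp
  next
    case False
    have v: "in_X a r v" and vv: "\<forall>v\<in>set vs. in_X a r v" using Cons.prems by auto
    have IH: "\<And>m i. (\<lambda>k. s ^ k * BB k vs m i) sums MMk s vs m i" using Cons.IH False vv by blast
    obtain q where lq: "length vs = Suc q" using False by (cases vs) auto
    define Pr where "Pr = (\<Prod>v\<leftarrow>vs. norm_X a r v)"
    have Pr0: "0 \<le> Pr" unfolding Pr_def using vv X_nonneg[OF r] by (auto intro!: prod_list_nonneg)
    obtain K where K: "0 \<le> K" and HK: "\<And>k. in_X a r (BB k vs) \<and> norm_X a r (BB k vs) \<le> K * (1 / \<tau>) ^ k * Pr"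
      using BB_bound[OF a r t, of q] lq vv Pr_def by blast
    have WX: "in_X a r (MMk s vs)"
      using series_X[OF a r t(1) K Pr0 s, of "\<lambda>k. BB k vs" "MMk s vs"] HK IH by blast
    have sr: "\<bar>s\<bar> < r\<^sup>2" using s t by simp
    have nv: "0 \<le> norm_X a r v" by (rule X_nonneg[OF r v])
    define C where "C = 2 * norm_X a r v * K * Pr / r ^ n"
    define q1 where "q1 = \<bar>s\<bar> / r\<^sup>2"
    define q2 where "q2 = \<bar>s\<bar> / \<tau>"
    have q1: "0 \<le> q1" "q1 < 1" using sr r by (auto simp: q1_def)
    have q2: "0 \<le> q2" "q2 < 1" using s t by (auto simp: q2_def)
    define x where "x c k = s ^ c * (s ^ k * DD c v (BB k vs) n j)" for c k
    define y where "y c k = q1 ^ c * C * q2 ^ k" for c k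
    have xy: "\<And>c k. \<bar>x c k\<bar> \<le> y c k"
    proof -
      fix c k
      have D: "in_X a r (DD c v (BB k vs)) \<and> norm_X a r (DD c v (BB k vs))
          \<le> 2 * (1 / r\<^sup>2) ^ c * (norm_X a r v * norm_X a r (BB k vs))"
        using DD_bound[OF a r v] HK by blast
      have "\<bar>DD c v (BB k vs) n j\<bar> \<le> norm_X a r (DD c v (BB k vs)) / r ^ n"
        using X_pt3[OF a r] D by blast
      also have "\<dots> \<le> 2 * (1 / r\<^sup>2) ^ c * (norm_X a r v * (K * (1 / \<tau>) ^ k * Pr)) / r ^ n"
      proof -
        have "2 * (1 / r\<^sup>2) ^ c * (norm_X a r v * norm_X a r (BB k vs)) \<le> 2 * (1 / r\<^sup>2) ^ c * (norm_X a r v * (K * (1 / \<tau>) ^ k * Pr))"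
          using HK[of k] nv by (intro mult_left_mono) auto
        hence "norm_X a r (DD c v (BB k vs)) \<le> 2 * (1 / r\<^sup>2) ^ c * (norm_X a r v * (K * (1 / \<tau>) ^ k * Pr))"
          using order_trans[OF conjunct2[OF D]] by blast
        thus ?thesis using r by (intro divide_right_mono) auto
      qed
      finally have h: "\<bar>DD c v (BB k vs) n j\<bar> \<le> 2 * (1 / r\<^sup>2) ^ c * (norm_X a r v * (K * (1 / \<tau>) ^ k * Pr)) / r ^ n" .
      have "\<bar>x c k\<bar> = \<bar>s\<bar> ^ c * \<bar>s\<bar> ^ k * \<bar>DD c v (BB k vs) n j\<bar>"
        by (simp add: x_def abs_mult power_abs)
      also have "\<dots> \<le> \<bar>s\<bar> ^ c * \<bar>s\<bar> ^ k * (2 * (1 / r\<^sup>2) ^ c * (norm_X a r v * (K * (1 / \<tau>) ^ k * Pr)) / r ^ n)"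
        by (rule mult_left_mono[OF h]) simp
      also have "\<dots> = y c k"
        unfolding y_def C_def q1_def q2_def using r t by (simp add: power_divide field_simps)
      finally show "\<bar>x c k\<bar> \<le> y c k" .
    qed
    have ys: "\<And>c. summable (y c)" unfolding y_def using q2 by (intro summable_mult summable_geometric) simp
    have ysum: "\<And>c. suminf (y c) = C / (1 - q2) * q1 ^ c"
      unfolding y_def using q2 by (simp add: suminf_mult suminf_geometric)
    have yss: "summable (\<lambda>c. suminf (y c))" unfolding ysum using q1
      by (intro summable_mult summable_geometric) simp
    obtain T where A1: "(\<lambda>i. suminf (x i)) sums T" and A3: "(\<lambda>m. \<Sum>i\<le>m. x i (m - i)) sums T"
      using DS[OF xy ys yss] by blast
    have xrow: "\<And>c. suminf (x c) = s ^ c * DD c v (MMk s vs) n j"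
    proof -
      fix c
      have "(\<lambda>k. DD c v (\<lambda>m i. s ^ k * BB k vs m i) n j) sums DD c v (MMk s vs) n j"
        by (rule DD_sums2) (rule IH)
      hence "(\<lambda>k. s ^ k * DD c v (BB k vs) n j) sums DD c v (MMk s vs) n j" by (simp add: DD_scale2)
      hence "x c sums (s ^ c * DD c v (MMk s vs) n j)" unfolding x_def by (rule sums_mult)
      thus "suminf (x c) = s ^ c * DD c v (MMk s vs) n j" by (rule sums_unique[symmetric])
    qed
    have "(\<lambda>c. s ^ c * DD c v (MMk s vs) n j) sums MM s v (MMk s vs) n j"
      by (rule MM_expand[OF a r v WX sr])
    hence T: "T = MMk s (v # vs) n j"
      using A1 xrow MMk_cons[OF False] sums_unique2 by (metis (no_types, lifting) ext)
    have diag: "\<And>m. (\<Sum>i\<le>m. x i (m - i)) = s ^ m * BB m (v # vs) n j"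
    proof -
      fix m
      have "(\<Sum>i\<le>m. x i (m - i)) = (\<Sum>i\<le>m. s ^ m * DD i v (BB (m - i) vs) n j)"
      proof (rule sum.cong[OF refl])
        fix i assume "i \<in> {..m}"
        hence "s ^ i * s ^ (m - i) = s ^ m" by (simp add: power_add[symmetric])
        thus "x i (m - i) = s ^ m * DD i v (BB (m - i) vs) n j" unfolding x_def by (metis mult.assoc)
      qed
      also have "\<dots> = s ^ m * BB m (v # vs) n j" by (simp add: BB_cons[OF False] sum_distrib_left)
      finally show "(\<Sum>i\<le>m. x i (m - i)) = s ^ m * BB m (v # vs) n j" .
    qed
    show ?thesis using A3 unfolding diag T .
  qed
qed

lemma BB_lin:
  "i < length vs \<Longrightarrow> BB k (vs[i := (\<lambda>n j. t * x n j + y n j)]) = (\<lambda>n j. t * BB k (vs[i := x]) n j + BB k (vs[i := y]) n j)"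
proof (induction vs arbitrary: i k)
  case Nil thus ?case by simp
next
  case (Cons v vs)
  show ?case
  proof (cases "vs = []")
    case True
    thus ?thesis using Cons.prems by (auto intro!: ext)
  next
    case False
    show ?thesis
    proof (cases i)
      case 0
      thus ?thesis using False by (simp add: BB_cons DD_lin1 sum.distrib sum_distrib_left)
    next
      case (Suc i')
      have i': "i' < length vs" using Cons.prems Suc by simp
      have ne: "\<And>z. vs[i' := z] \<noteq> []" using False by simp
      show ?thesis using Suc
        by (simp add: BB_cons[OF ne] Cons.IH[OF i'] DD_lin2 sum.distrib sum_distrib_left)
    qed
  qed
qed

lemma BB_multilin: "multilinear_X a r p (BB k)"
  unfolding multilinear_X_def using BB_lin by auto

lemma mlnorm_bounds:
  assumes C: "0 \<le> C" and b: "\<And>vs. length vs = p \<Longrightarrow> \<forall>v\<in>set vs. in_X a r v \<Longrightarrow> norm_X a r (T vs) \<le> C * (\<Prod>v\<leftarrow>vs. norm_X a r v)"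
  shows "0 \<le> mlnorm a r p T \<and> mlnorm a r p T \<le> C"
proof -
  let ?S = "{C. 0 \<le> C \<and> (\<forall>vs. length vs = p \<and> (\<forall>v\<in>set vs. in_X a r v) \<longrightarrow>
          norm_X a r (T vs) \<le> C * (\<Prod>v\<leftarrow>vs. norm_X a r v))}"
  have mem: "C \<in> ?S" using C b by auto
  have bdd: "bdd_below ?S" by (rule bdd_belowI[where m=0]) auto
  have "mlnorm a r p T \<le> C" unfolding mlnorm_def by (rule cInf_lower[OF mem bdd])
  moreover have ne: "?S \<noteq> {}" using mem by blast
  moreover have "0 \<le> mlnorm a r p T" unfolding mlnorm_def by (rule cInf_greatest[OF ne]) auto
  ultimately show ?thesis by simp
qed

lemma binom_sums: "(\<lambda>m. real (k choose m) * s0 ^ (k - m) * h ^ m) sums ((s0 + h) ^ k)"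
proof -
  have "(\<lambda>m. real (k choose m) * s0 ^ (k - m) * h ^ m) sums (\<Sum>m\<in>{..k}. real (k choose m) * s0 ^ (k - m) * h ^ m)"
    by (rule sums_finite) auto
  moreover have "(\<Sum>m\<in>{..k}. real (k choose m) * s0 ^ (k - m) * h ^ m) = (h + s0) ^ k"
    by (simp add: binomial_ring mult_ac)
  ultimately show ?thesis by (simp add: add.commute)
qed

definition alpha :: "real \<Rightarrow> real \<Rightarrow> real \<Rightarrow> nat \<Rightarrow> nat \<Rightarrow> real" where
  "alpha K \<tau> s0 m k = real (k choose m) * \<bar>s0\<bar> ^ (k - m) * (K * (1 / \<tau>) ^ k)"

lemma alpha_nonneg: "0 \<le> K \<Longrightarrow> 0 < \<tau> \<Longrightarrow> 0 \<le> alpha K \<tau> s0 m k"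
  unfolding alpha_def by simp

lemma binom_DS:
  assumes K: "0 \<le> K" and t: "0 < \<tau>" and u: "0 \<le> u" and su: "\<bar>s0\<bar> + u < \<tau>"
  shows "(\<forall>m. summable (\<lambda>k. alpha K \<tau> s0 m k * u ^ m)) \<and> summable (\<lambda>m. \<Sum>k. alpha K \<tau> s0 m k * u ^ m)"
proof -
  define y where "y k m = alpha K \<tau> s0 m k * u ^ m" for k m
  have y0: "\<And>k m. \<bar>y k m\<bar> \<le> y k m" using alpha_nonneg[OF K t] u by (simp add: y_def)
  have rs: "\<And>k. y k sums (K * ((\<bar>s0\<bar> + u) / \<tau>) ^ k)"
  proof -
    fix k
    have "(\<lambda>m. (K * (1 / \<tau>) ^ k) * (real (k choose m) * \<bar>s0\<bar> ^ (k - m) * u ^ m)) sums ((K * (1 / \<tau>) ^ k) * (\<bar>s0\<bar> + u) ^ k)"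
      by (rule sums_mult[OF binom_sums])
    moreover have "y k = (\<lambda>m. (K * (1 / \<tau>) ^ k) * (real (k choose m) * \<bar>s0\<bar> ^ (k - m) * u ^ m))"
      by (rule ext) (simp add: y_def alpha_def mult_ac)
    moreover have "(K * (1 / \<tau>) ^ k) * (\<bar>s0\<bar> + u) ^ k = K * ((\<bar>s0\<bar> + u) / \<tau>) ^ k"
      by (simp add: power_divide)
    ultimately show "y k sums (K * ((\<bar>s0\<bar> + u) / \<tau>) ^ k)" by simp
  qed
  have ys: "\<And>k. summable (y k)" using rs sums_summable by blast
  have q: "norm ((\<bar>s0\<bar> + u) / \<tau>) < 1" using su t u by simp
  have yss: "summable (\<lambda>k. suminf (y k))" using rs q
    by (simp add: sums_iff summable_mult summable_geometric)
  obtain T where "\<forall>k. summable (\<lambda>i. y i k)" "(\<lambda>k. \<Sum>i. y i k) sums T"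
    using DS[OF y0 ys yss] by blast
  thus ?thesis unfolding y_def using sums_summable by blast
qed

definition Acoef :: "(nat \<Rightarrow> seqv list \<Rightarrow> seqv) \<Rightarrow> real \<Rightarrow> nat \<Rightarrow> seqv list \<Rightarrow> seqv" where
  "Acoef B s0 m vs = (\<lambda>n j. \<Sum>k. real (k choose m) * s0 ^ (k - m) * B k vs n j)"

locale geo =
  fixes a r \<tau> K :: real and p :: nat and B :: "nat \<Rightarrow> seqv list \<Rightarrow> seqv" and F :: "real \<Rightarrow> seqv list \<Rightarrow> seqv"
  assumes a: "0 \<le> a" and r: "0 < r" and t: "0 < \<tau>" and K: "0 \<le> K"
    and Bml: "\<And>k. multilinear_X a r p (B k)"
    and Bb: "\<And>k vs. length vs = p \<Longrightarrow> \<forall>v\<in>set vs. in_X a r v \<Longrightarrow>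
        in_X a r (B k vs) \<and> norm_X a r (B k vs) \<le> K * (1 / \<tau>) ^ k * (\<Prod>v\<leftarrow>vs. norm_X a r v)"
    and rep: "\<And>s vs n j. \<bar>s\<bar> < \<tau> \<Longrightarrow> length vs = p \<Longrightarrow> \<forall>v\<in>set vs. in_X a r v \<Longrightarrow>
        (\<lambda>k. s ^ k * B k vs n j) sums F s vs n j"
begin

lemma Pi_nonneg: "\<forall>v\<in>set vs. in_X a r v \<Longrightarrow> 0 \<le> (\<Prod>v\<leftarrow>vs. norm_X a r v)"
  using X_nonneg[OF r] by (auto intro!: prod_list_nonneg)

lemma upd_valid:
  assumes "length vs = p" "\<forall>v\<in>set vs. in_X a r v" "in_X a r z"
  shows "length (vs[i := z]) = p \<and> (\<forall>v\<in>set (vs[i := z]). in_X a r v)"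
  using assms set_update_subset_insert[of vs i z] by auto

lemma lin_comb_X: "in_X a r x \<Longrightarrow> in_X a r y \<Longrightarrow> in_X a r (\<lambda>n j. c * x n j + y n j)"
  using X_add[OF r, of a "\<lambda>n j. c * x n j" y] X_scale[OF r, of a x c] by auto

lemma B_lin:
  assumes "length vs = p" "\<forall>v\<in>set vs. in_X a r v" "i < p" "in_X a r x" "in_X a r y"
  shows "B k (vs[i := (\<lambda>n j. c * x n j + y n j)]) n j = c * B k (vs[i := x]) n j + B k (vs[i := y]) n j"
proof -
  have "B k (vs[i := (\<lambda>n j. c * x n j + y n j)]) = (\<lambda>n j. c * B k (vs[i := x]) n j + B k (vs[i := y]) n j)"
    using Bml[of k] assms unfolding multilinear_X_def by blast
  thus ?thesis by simp
qed

lemma B_pt: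
  assumes "length vs = p" "\<forall>v\<in>set vs. in_X a r v"
  shows "\<bar>B k vs n j\<bar> \<le> K * (1 / \<tau>) ^ k * (\<Prod>v\<leftarrow>vs. norm_X a r v) / r ^ n"
proof -
  have "\<bar>B k vs n j\<bar> \<le> norm_X a r (B k vs) / r ^ n" using X_pt3[OF a r] Bb[OF assms] by blast
  moreover have "norm_X a r (B k vs) / r ^ n \<le> K * (1 / \<tau>) ^ k * (\<Prod>v\<leftarrow>vs. norm_X a r v) / r ^ n"
    using Bb[OF assms, of k] r by (intro divide_right_mono) auto
  ultimately show ?thesis by linarith
qed

lemma F_bounded:
  assumes s: "\<bar>s\<bar> < \<tau>"
  shows "bounded_mlin a r p (F s) \<and> mlnorm a r p (F s) \<le> K / (1 - \<bar>s\<bar> / \<tau>)"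
proof -
  have q: "0 < 1 - \<bar>s\<bar> / \<tau>" using s t by simp
  have FX: "in_X a r (F s vs) \<and> norm_X a r (F s vs) \<le> K / (1 - \<bar>s\<bar> / \<tau>) * (\<Prod>v\<leftarrow>vs. norm_X a r v)"
    if "length vs = p" "\<forall>v\<in>set vs. in_X a r v" for vs
    using series_X[OF a r t K Pi_nonneg[OF that(2)] s, of "\<lambda>k. B k vs" "F s vs"] Bb[OF that] rep[OF s that]
    by auto
  have ml: "multilinear_X a r p (F s)"
    unfolding multilinear_X_def
  proof (intro allI impI)
    fix vs i x y c assume h: "length vs = p \<and> (\<forall>v\<in>set vs. in_X a r v) \<and> i < p \<and> in_X a r x \<and> in_X a r y"
    have vx: "length (vs[i := x]) = p \<and> (\<forall>v\<in>set (vs[i := x]). in_X a r v)" using upd_valid h by blast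
    have vy: "length (vs[i := y]) = p \<and> (\<forall>v\<in>set (vs[i := y]). in_X a r v)" using upd_valid h by blast
    have vz: "length (vs[i := (\<lambda>n j. c * x n j + y n j)]) = p \<and> (\<forall>v\<in>set (vs[i := (\<lambda>n j. c * x n j + y n j)]). in_X a r v)"
      using upd_valid h lin_comb_X by blast
    show "F s (vs[i := (\<lambda>n j. c * x n j + y n j)]) = (\<lambda>n j. c * F s (vs[i := x]) n j + F s (vs[i := y]) n j)"
    proof (intro ext)
      fix n j
      have e1: "(\<lambda>k. c * (s ^ k * B k (vs[i := x]) n j) + s ^ k * B k (vs[i := y]) n j) sums (c * F s (vs[i := x]) n j + F s (vs[i := y]) n j)"
        using rep[OF s] vx vy by (intro sums_add sums_mult) auto
      have e2: "(\<lambda>k. c * (s ^ k * B k (vs[i := x]) n j) + s ^ k * B k (vs[i := y]) n j) = (\<lambda>k. s ^ k * B k (vs[i := (\<lambda>n j. c * x n j + y n j)]) n j)"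
        using B_lin h by (auto simp: algebra_simps)
      have e3: "(\<lambda>k. s ^ k * B k (vs[i := (\<lambda>n j. c * x n j + y n j)]) n j) sums F s (vs[i := (\<lambda>n j. c * x n j + y n j)]) n j"
        using rep[OF s] vz by blast
      show "F s (vs[i := (\<lambda>n j. c * x n j + y n j)]) n j = c * F s (vs[i := x]) n j + F s (vs[i := y]) n j"
        by (rule sums_unique2[OF e3 e1[unfolded e2]])
    qed
  qed
  have C0: "0 \<le> K / (1 - \<bar>s\<bar> / \<tau>)" using K q by simp
  show ?thesis using mlnorm_bounds[OF C0, of p a r "F s"] FX ml unfolding bounded_mlin_def by blast
qed

end

lemma alpha_row:
  assumes "0 < \<tau>"
  shows "(\<lambda>m. alpha K \<tau> s0 m k * u ^ m) sums (K * ((\<bar>s0\<bar> + u) / \<tau>) ^ k)"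
proof -
  have "(\<lambda>m. (K * (1 / \<tau>) ^ k) * (real (k choose m) * \<bar>s0\<bar> ^ (k - m) * u ^ m)) sums ((K * (1 / \<tau>) ^ k) * (\<bar>s0\<bar> + u) ^ k)"
    by (rule sums_mult[OF binom_sums])
  moreover have "(\<lambda>m. alpha K \<tau> s0 m k * u ^ m) = (\<lambda>m. (K * (1 / \<tau>) ^ k) * (real (k choose m) * \<bar>s0\<bar> ^ (k - m) * u ^ m))"
    by (rule ext) (simp add: alpha_def mult_ac)
  moreover have "(K * (1 / \<tau>) ^ k) * (\<bar>s0\<bar> + u) ^ k = K * ((\<bar>s0\<bar> + u) / \<tau>) ^ k"
    by (simp add: power_divide)
  ultimately show ?thesis by simp
qed

lemma alpha_summable:
  assumes K: "0 \<le> K" and t: "0 < \<tau>" and s0: "\<bar>s0\<bar> < \<tau>"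
  shows "summable (\<lambda>k. alpha K \<tau> s0 m k)"
proof -
  define \<rho> where "\<rho> = (\<tau> - \<bar>s0\<bar>) / 2"
  have \<rho>1: "0 < \<rho>" unfolding \<rho>_def using s0 by (simp add: field_simps)
  have \<rho>2: "\<bar>s0\<bar> + \<rho> < \<tau>" unfolding \<rho>_def using s0 by (simp add: field_simps)
  note \<rho> = \<rho>1 \<rho>2
  have "summable (\<lambda>k. alpha K \<tau> s0 m k * \<rho> ^ m)" using binom_DS[OF K t _ \<rho>(2)] \<rho> by auto
  hence "summable (\<lambda>k. (alpha K \<tau> s0 m k * \<rho> ^ m) * (1 / \<rho> ^ m))" by (rule summable_mult2)
  thus ?thesis using \<rho> by simp
qed

context geo begin

lemma A_props:
  assumes s0: "\<bar>s0\<bar> < \<tau>" and vs: "length vs = p" "\<forall>v\<in>set vs. in_X a r v"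
  shows "(\<forall>n j. summable (\<lambda>k. real (k choose m) * s0 ^ (k - m) * B k vs n j)) \<and> in_X a r (Acoef B s0 m vs)
     \<and> norm_X a r (Acoef B s0 m vs) \<le> (\<Sum>k. alpha K \<tau> s0 m k) * (\<Prod>v\<leftarrow>vs. norm_X a r v)"
proof -
  define P where "P = (\<Prod>v\<leftarrow>vs. norm_X a r v)"
  have P0: "0 \<le> P" unfolding P_def by (rule Pi_nonneg[OF vs(2)])
  define u where "u k = (\<lambda>n j. (real (k choose m) * s0 ^ (k - m)) * B k vs n j)" for k
  have uX: "\<And>k. in_X a r (u k) \<and> norm_X a r (u k) \<le> \<bar>real (k choose m) * s0 ^ (k - m)\<bar> * norm_X a r (B k vs)"
    unfolding u_def by (rule X_scale[OF r]) (use Bb[OF vs] in blast)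
  have ub: "\<And>k. norm (norm_X a r (u k)) \<le> alpha K \<tau> s0 m k * P"
  proof -
    fix k
    have "norm_X a r (u k) \<le> \<bar>real (k choose m) * s0 ^ (k - m)\<bar> * (K * (1 / \<tau>) ^ k * P)"
      using uX[of k] mult_left_mono[OF conjunct2[OF Bb[OF vs, of k]], of "\<bar>real (k choose m) * s0 ^ (k - m)\<bar>"]
      unfolding P_def by simp
    also have "\<dots> = alpha K \<tau> s0 m k * P" by (simp add: alpha_def abs_mult power_abs)
    finally show "norm (norm_X a r (u k)) \<le> alpha K \<tau> s0 m k * P" using X_nonneg[OF r] uX by simp
  qed
  have as: "summable (\<lambda>k. alpha K \<tau> s0 m k)" by (rule alpha_summable[OF K t s0])
  have aPs: "summable (\<lambda>k. alpha K \<tau> s0 m k * P)" by (rule summable_mult2[OF as])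
  have us: "summable (\<lambda>k. norm_X a r (u k))" by (rule summable_comparison_test'[OF aPs ub])
  note L = X_series[OF a r _ us] uX
  have "(\<Sum>k. norm_X a r (u k)) \<le> (\<Sum>k. alpha K \<tau> s0 m k * P)"
  proof (rule suminf_le[OF _ us aPs])
    fix k show "norm_X a r (u k) \<le> alpha K \<tau> s0 m k * P" using ub[of k] by (simp add: abs_le_iff)
  qed
  also have "\<dots> = (\<Sum>k. alpha K \<tau> s0 m k) * P" by (rule suminf_mult2[OF as, symmetric])
  finally show ?thesis using L unfolding u_def Acoef_def P_def by auto
qed

lemma A_bounded:
  assumes s0: "\<bar>s0\<bar> < \<tau>"
  shows "bounded_mlin a r p (Acoef B s0 m) \<and> 0 \<le> mlnorm a r p (Acoef B s0 m) \<and> mlnorm a r p (Acoef B s0 m) \<le> (\<Sum>k. alpha K \<tau> s0 m k)"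
proof -
  have C0: "0 \<le> (\<Sum>k. alpha K \<tau> s0 m k)"
    by (rule suminf_nonneg[OF alpha_summable[OF K t s0]]) (rule alpha_nonneg[OF K t])
  have ml: "multilinear_X a r p (Acoef B s0 m)"
    unfolding multilinear_X_def
  proof (intro allI impI)
    fix vs i x y c assume h: "length vs = p \<and> (\<forall>v\<in>set vs. in_X a r v) \<and> i < p \<and> in_X a r x \<and> in_X a r y"
    have vx: "length (vs[i := x]) = p \<and> (\<forall>v\<in>set (vs[i := x]). in_X a r v)" using upd_valid h by blast
    have vy: "length (vs[i := y]) = p \<and> (\<forall>v\<in>set (vs[i := y]). in_X a r v)" using upd_valid h by blast
    show "Acoef B s0 m (vs[i := (\<lambda>n j. c * x n j + y n j)]) = (\<lambda>n j. c * Acoef B s0 m (vs[i := x]) n j + Acoef B s0 m (vs[i := y]) n j)"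
    proof (intro ext)
      fix n j
      let ?f = "\<lambda>k. real (k choose m) * s0 ^ (k - m) * B k (vs[i := x]) n j"
      let ?g = "\<lambda>k. real (k choose m) * s0 ^ (k - m) * B k (vs[i := y]) n j"
      have sf: "summable ?f" using A_props[OF s0] vx by blast
      have sg: "summable ?g" using A_props[OF s0] vy by blast
      have "(\<lambda>k. c * ?f k + ?g k) sums (c * suminf ?f + suminf ?g)"
        by (intro sums_add sums_mult summable_sums sf sg)
      moreover have "(\<lambda>k. c * ?f k + ?g k) = (\<lambda>k. real (k choose m) * s0 ^ (k - m) * B k (vs[i := (\<lambda>n j. c * x n j + y n j)]) n j)"
        using B_lin h by (auto simp: algebra_simps)
      ultimately show "Acoef B s0 m (vs[i := (\<lambda>n j. c * x n j + y n j)]) n j = c * Acoef B s0 m (vs[i := x]) n j + Acoef B s0 m (vs[i := y]) n j"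
        unfolding Acoef_def by (simp add: sums_iff)
    qed
  qed
  show ?thesis using mlnorm_bounds[OF C0, of p a r "Acoef B s0 m"] A_props[OF s0] ml
    unfolding bounded_mlin_def by blast
qed

lemma F_expand:
  assumes s0: "\<bar>s0\<bar> < \<tau>" and ss: "\<bar>s0\<bar> + \<bar>s - s0\<bar> < \<tau>" and vs: "length vs = p" "\<forall>v\<in>set vs. in_X a r v"
  shows "(\<lambda>m. (s - s0) ^ m * Acoef B s0 m vs n j) sums F s vs n j"
proof -
  define P where "P = (\<Prod>v\<leftarrow>vs. norm_X a r v)"
  have P0: "0 \<le> P" unfolding P_def by (rule Pi_nonneg[OF vs(2)])
  define u where "u = \<bar>s - s0\<bar>"
  define Q where "Q = P / r ^ n"
  have Q0: "0 \<le> Q" using P0 r by (simp add: Q_def)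
  define x where "x k m = real (k choose m) * s0 ^ (k - m) * (s - s0) ^ m * B k vs n j" for k m
  define y where "y k m = alpha K \<tau> s0 m k * u ^ m * Q" for k m
  have xy: "\<And>k m. \<bar>x k m\<bar> \<le> y k m"
  proof -
    fix k m
    have "\<bar>x k m\<bar> = real (k choose m) * \<bar>s0\<bar> ^ (k - m) * u ^ m * \<bar>B k vs n j\<bar>"
      by (simp add: x_def u_def abs_mult power_abs)
    also have "\<dots> \<le> real (k choose m) * \<bar>s0\<bar> ^ (k - m) * u ^ m * (K * (1 / \<tau>) ^ k * P / r ^ n)"
    proof -
      have "\<bar>B k vs n j\<bar> \<le> K * (1 / \<tau>) ^ k * P / r ^ n" using B_pt[OF vs] unfolding P_def .
      thus ?thesis by (rule mult_left_mono) (simp add: u_def)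
    qed
    also have "\<dots> = y k m" by (simp add: y_def alpha_def Q_def)
    finally show "\<bar>x k m\<bar> \<le> y k m" .
  qed
  have yr: "\<And>k. y k sums (K * ((\<bar>s0\<bar> + u) / \<tau>) ^ k * Q)"
    unfolding y_def by (rule sums_mult2[OF alpha_row[OF t]])
  have ys: "\<And>k. summable (y k)" using yr sums_summable by blast
  have q: "norm ((\<bar>s0\<bar> + u) / \<tau>) < 1" using ss t by (simp add: u_def)
  have yss: "summable (\<lambda>k. suminf (y k))" using yr q
    by (simp add: sums_iff summable_mult summable_mult2 summable_geometric)
  obtain T where A1: "(\<lambda>i. suminf (x i)) sums T" and A2: "(\<lambda>k. \<Sum>i. x i k) sums T"
    using DS[OF xy ys yss] by blast
  have row: "\<And>k. suminf (x k) = s ^ k * B k vs n j"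
  proof -
    fix k
    have "(\<lambda>m. real (k choose m) * s0 ^ (k - m) * (s - s0) ^ m * B k vs n j) sums ((s0 + (s - s0)) ^ k * B k vs n j)"
      by (rule sums_mult2[OF binom_sums])
    thus "suminf (x k) = s ^ k * B k vs n j" unfolding x_def by (simp add: sums_iff)
  qed
  have sl: "\<bar>s\<bar> < \<tau>" using ss by linarith
  have T: "T = F s vs n j" using A1 rep[OF sl vs] unfolding row by (simp add: sums_iff)
  have col: "\<And>m. (\<Sum>k. x k m) = (s - s0) ^ m * Acoef B s0 m vs n j"
  proof -
    fix m
    have sA: "summable (\<lambda>k. real (k choose m) * s0 ^ (k - m) * B k vs n j)" using A_props[OF s0 vs] by blast
    have "(\<Sum>k. x k m) = (\<Sum>k. (s - s0) ^ m * (real (k choose m) * s0 ^ (k - m) * B k vs n j))"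
      unfolding x_def by (simp add: mult_ac)
    also have "\<dots> = (s - s0) ^ m * Acoef B s0 m vs n j"
      unfolding Acoef_def by (rule suminf_mult[OF sA])
    finally show "(\<Sum>k. x k m) = (s - s0) ^ m * Acoef B s0 m vs n j" .
  qed
  show ?thesis using A2 unfolding col T .
qed

lemma analytic:
  assumes S: "\<And>s. s \<in> S \<Longrightarrow> \<bar>s\<bar> < \<tau>"
  shows "analytic_mlin a r p F S"
  unfolding analytic_mlin_def
proof (intro conjI ballI)
  fix s assume "s \<in> S" thus "bounded_mlin a r p (F s)" using F_bounded S by blast
next
  fix s0 assume "s0 \<in> S"
  hence s0: "\<bar>s0\<bar> < \<tau>" using S by blast
  define \<rho> where "\<rho> = (\<tau> - \<bar>s0\<bar>) / 2"
  have \<rho>1: "0 < \<rho>" unfolding \<rho>_def using s0 by (simp add: field_simps)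
  have \<rho>2: "\<bar>s0\<bar> + \<rho> < \<tau>" unfolding \<rho>_def using s0 by (simp add: field_simps)
  note \<rho> = \<rho>1 \<rho>2
  define aa where "aa m = (\<Sum>k. alpha K \<tau> s0 m k)" for m
  have aa0: "\<And>m. 0 \<le> aa m" unfolding aa_def
    by (rule suminf_nonneg[OF alpha_summable[OF K t s0]]) (rule alpha_nonneg[OF K t])
  define g where "g m = aa m * \<rho> ^ m" for m
  have g0: "\<And>m. 0 \<le> g m" using aa0 \<rho> by (simp add: g_def)
  have gs: "summable g"
  proof -
    have "summable (\<lambda>m. \<Sum>k. alpha K \<tau> s0 m k * \<rho> ^ m)" using binom_DS[OF K t _ \<rho>(2)] \<rho> by auto
    moreover have "\<And>m. (\<Sum>k. alpha K \<tau> s0 m k * \<rho> ^ m) = g m"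
      unfolding g_def aa_def by (rule suminf_mult2[OF alpha_summable[OF K t s0], symmetric])
    ultimately show ?thesis by simp
  qed
  have AB: "\<And>m. bounded_mlin a r p (Acoef B s0 m) \<and> 0 \<le> mlnorm a r p (Acoef B s0 m) \<and> mlnorm a r p (Acoef B s0 m) \<le> aa m"
    unfolding aa_def by (rule A_bounded[OF s0])
  show "\<exists>\<rho>>0. \<exists>A. (\<forall>m. bounded_mlin a r p (A m)) \<and> summable (\<lambda>m. mlnorm a r p (A m) * \<rho> ^ m) \<and>
      (\<forall>s\<in>S. \<bar>s - s0\<bar> < \<rho> \<longrightarrow>
        (\<lambda>N. mlnorm a r p (\<lambda>vs n j. F s vs n j - (\<Sum>m<N. (s - s0) ^ m * A m vs n j))) \<longlonglongrightarrow> 0)"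
  proof (intro exI[of _ \<rho>] exI[of _ "Acoef B s0"] conjI allI ballI impI)
    show "0 < \<rho>" by (rule \<rho>(1))
    fix m show "bounded_mlin a r p (Acoef B s0 m)" using AB by blast
  next
    show "summable (\<lambda>m. mlnorm a r p (Acoef B s0 m) * \<rho> ^ m)"
    proof (rule summable_comparison_test'[OF gs])
      fix m
      show "norm (mlnorm a r p (Acoef B s0 m) * \<rho> ^ m) \<le> g m"
        using AB[of m] \<rho> by (simp add: g_def abs_mult mult_right_mono)
    qed
  next
    fix s assume "s \<in> S" and ss: "\<bar>s - s0\<bar> < \<rho>"
    have ss': "\<bar>s0\<bar> + \<bar>s - s0\<bar> < \<tau>" using ss \<rho> by linarith
    define tl where "tl N = (\<Sum>m. g (m + N))" for N
    have bnd: "0 \<le> mlnorm a r p (\<lambda>vs n j. F s vs n j - (\<Sum>m<N. (s - s0) ^ m * Acoef B s0 m vs n j)) \<and>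
               mlnorm a r p (\<lambda>vs n j. F s vs n j - (\<Sum>m<N. (s - s0) ^ m * Acoef B s0 m vs n j)) \<le> tl N" for N
    proof (rule mlnorm_bounds)
      show "0 \<le> tl N" unfolding tl_def
        by (rule suminf_nonneg[OF summable_ignore_initial_segment[OF gs]]) (rule g0)
      fix vs assume vs: "length vs = p" "\<forall>v\<in>set vs. in_X a r v"
      define P where "P = (\<Prod>v\<leftarrow>vs. norm_X a r v)"
      have P0: "0 \<le> P" unfolding P_def by (rule Pi_nonneg[OF vs(2)])
      define u where "u m = (\<lambda>n j. (s - s0) ^ (m + N) * Acoef B s0 (m + N) vs n j)" for m
      have uX: "\<And>m. in_X a r (u m) \<and> norm_X a r (u m) \<le> \<bar>(s - s0) ^ (m + N)\<bar> * norm_X a r (Acoef B s0 (m + N) vs)"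
        unfolding u_def by (rule X_scale[OF r]) (use A_props[OF s0 vs] in blast)
      have ub: "\<And>m. norm (norm_X a r (u m)) \<le> g (m + N) * P"
      proof -
        fix m
        have A: "norm_X a r (Acoef B s0 (m + N) vs) \<le> aa (m + N) * P"
          using A_props[OF s0 vs, of "m + N"] unfolding aa_def P_def by blast
        have "\<bar>(s - s0) ^ (m + N)\<bar> \<le> \<rho> ^ (m + N)"
          unfolding power_abs by (rule power_mono) (use ss in auto)
        hence "\<bar>(s - s0) ^ (m + N)\<bar> * norm_X a r (Acoef B s0 (m + N) vs) \<le> \<rho> ^ (m + N) * (aa (m + N) * P)"
          using A X_nonneg[OF r] A_props[OF s0 vs] by (intro mult_mono) auto
        thus "norm (norm_X a r (u m)) \<le> g (m + N) * P"
          using uX[of m] X_nonneg[OF r] by (simp add: g_def mult_ac)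
      qed
      have gPs: "summable (\<lambda>m. g (m + N) * P)"
        by (rule summable_mult2[OF summable_ignore_initial_segment[OF gs]])
      have us: "summable (\<lambda>m. norm_X a r (u m))" by (rule summable_comparison_test'[OF gPs ub])
      note L = X_series[OF a r _ us] uX
      have eq: "(\<lambda>n j. F s vs n j - (\<Sum>m<N. (s - s0) ^ m * Acoef B s0 m vs n j)) = (\<lambda>n j. \<Sum>m. u m n j)"
      proof (intro ext)
        fix n j
        have "(\<lambda>m. (s - s0) ^ m * Acoef B s0 m vs n j) sums F s vs n j" by (rule F_expand[OF s0 ss' vs])
        hence "(\<lambda>m. (s - s0) ^ (m + N) * Acoef B s0 (m + N) vs n j) sums (F s vs n j - (\<Sum>m<N. (s - s0) ^ m * Acoef B s0 m vs n j))"
          by (subst sums_iff_shift) simp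
        thus "F s vs n j - (\<Sum>m<N. (s - s0) ^ m * Acoef B s0 m vs n j) = (\<Sum>m. u m n j)"
          unfolding u_def by (simp add: sums_iff)
      qed
      have "(\<Sum>m. norm_X a r (u m)) \<le> (\<Sum>m. g (m + N) * P)"
      proof (rule suminf_le[OF _ us gPs])
        fix m show "norm_X a r (u m) \<le> g (m + N) * P" using ub[of m] by (simp add: abs_le_iff)
      qed
      also have "\<dots> = tl N * P" unfolding tl_def
        by (rule suminf_mult2[OF summable_ignore_initial_segment[OF gs], symmetric])
      finally have "(\<Sum>m. norm_X a r (u m)) \<le> tl N * P" .
      thus "norm_X a r (\<lambda>n j. F s vs n j - (\<Sum>m<N. (s - s0) ^ m * Acoef B s0 m vs n j)) \<le> tl N * (\<Prod>v\<leftarrow>vs. norm_X a r v)"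
        unfolding eq P_def using L by (meson order_trans)
    qed
    have tl0: "tl \<longlonglongrightarrow> 0"
    proof -
      have e: "tl = (\<lambda>N. suminf g - (\<Sum>i<N. g i))"
        unfolding tl_def using suminf_split_initial_segment[OF gs] by (intro ext) (simp add: algebra_simps)
      have "(\<lambda>N. suminf g - (\<Sum>i<N. g i)) \<longlonglongrightarrow> suminf g - suminf g"
        by (intro tendsto_intros summable_LIMSEQ[OF gs])
      thus ?thesis unfolding e by simp
    qed
    show "(\<lambda>N. mlnorm a r p (\<lambda>vs n j. F s vs n j - (\<Sum>m<N. (s - s0) ^ m * Acoef B s0 m vs n j))) \<longlonglongrightarrow> 0"
      by (rule tendsto_sandwich[OF _ _ tendsto_const tl0]) (use bnd in auto)
  qed
qed

end

theorem lemma2p2: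
  fixes a r \<delta> :: real and p :: nat
  assumes "a > 0" and "r > 0" and "0 < \<delta>" and "\<delta> < r" and "p \<ge> 2"
  shows "analytic_mlin a r p (\<lambda>s vs. MMk s vs) {-(\<delta>\<^sup>2)<..<\<delta>\<^sup>2}
         \<and> (\<exists>C. \<forall>z::complex. cmod z < \<delta> \<longrightarrow> mlnorm a r p (MMk ((cmod z)\<^sup>2)) \<le> C)"
proof -
  have a: "0 \<le> a" and r: "0 < r" using assms by auto
  define \<tau> where "\<tau> = (\<delta>\<^sup>2 + r\<^sup>2) / 2"
  have d2: "\<delta>\<^sup>2 < r\<^sup>2" using assms by (intro power_strict_mono) auto
  have dp: "0 < \<delta>\<^sup>2" using assms by simp
  have s1: "0 < \<delta>\<^sup>2 + r\<^sup>2" using dp d2 by linarith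
  have t1: "0 < \<tau>" unfolding \<tau>_def using s1 by simp
  have t2: "\<tau> < r\<^sup>2" unfolding \<tau>_def using d2 by (simp add: field_simps)
  have t3: "\<delta>\<^sup>2 < \<tau>" unfolding \<tau>_def using d2 by (simp add: field_simps)
  note t = t1 t2 t3
  obtain q where pq: "p = Suc q" using assms(5) by (cases p) auto
  obtain K where K: "0 \<le> K" and HK: "\<forall>ws. length ws = Suc q \<and> (\<forall>v\<in>set ws. in_X a r v) \<longrightarrow>
     (\<forall>k. in_X a r (BB k ws) \<and> norm_X a r (BB k ws) \<le> K * (1 / \<tau>) ^ k * (\<Prod>v\<leftarrow>ws. norm_X a r v))"
    using BB_bound[OF a r t(1,2), of q] by blast
  interpret G: geo a r \<tau> K p BB MMk
  proof (unfold_locales)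
    show "0 \<le> a" "0 < r" "0 < \<tau>" "0 \<le> K" using a r t K by auto
    show "\<And>k. multilinear_X a r p (BB k)" by (rule BB_multilin)
    show "\<And>k vs. length vs = p \<Longrightarrow> \<forall>v\<in>set vs. in_X a r v \<Longrightarrow>
        in_X a r (BB k vs) \<and> norm_X a r (BB k vs) \<le> K * (1 / \<tau>) ^ k * (\<Prod>v\<leftarrow>vs. norm_X a r v)"
      using HK pq by blast
    show "\<And>s vs n j. \<bar>s\<bar> < \<tau> \<Longrightarrow> length vs = p \<Longrightarrow> \<forall>v\<in>set vs. in_X a r v \<Longrightarrow>
        (\<lambda>k. s ^ k * BB k vs n j) sums MMk s vs n j"
    proof -
      fix s vs n j assume s: "\<bar>s\<bar> < \<tau>" and l: "length vs = p" and v: "\<forall>v\<in>set vs. in_X a r v"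
      have "vs \<noteq> []" using l assms(5) by auto
      thus "(\<lambda>k. s ^ k * BB k vs n j) sums MMk s vs n j" by (rule BB_rep[OF a r t(1,2) s _ v])
    qed
  qed
  have an: "analytic_mlin a r p MMk {-(\<delta>\<^sup>2)<..<\<delta>\<^sup>2}"
    by (rule G.analytic) (use t in auto)
  have bd: "mlnorm a r p (MMk ((cmod z)\<^sup>2)) \<le> K / (1 - \<delta>\<^sup>2 / \<tau>)" if z: "cmod z < \<delta>" for z :: complex
  proof -
    define s where "s = (cmod z)\<^sup>2"
    have s0: "0 \<le> s" by (simp add: s_def)
    have sd: "s < \<delta>\<^sup>2" unfolding s_def using z by (intro power_strict_mono) auto
    have st: "\<bar>s\<bar> < \<tau>" using sd s0 t by simp
    have "mlnorm a r p (MMk s) \<le> K / (1 - \<bar>s\<bar> / \<tau>)" using G.F_bounded[OF st] by blast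
    also have "\<dots> \<le> K / (1 - \<delta>\<^sup>2 / \<tau>)"
    proof (rule divide_left_mono[OF _ K])
      show "1 - \<delta>\<^sup>2 / \<tau> \<le> 1 - \<bar>s\<bar> / \<tau>" using sd s0 t by (simp add: divide_right_mono)
      have "0 < 1 - \<delta>\<^sup>2 / \<tau>" using t by simp
      moreover have "0 < 1 - \<bar>s\<bar> / \<tau>" using st t by simp
      ultimately show "0 < (1 - \<bar>s\<bar> / \<tau>) * (1 - \<delta>\<^sup>2 / \<tau>)" by simp
    qed
    finally show ?thesis unfolding s_def .
  qed
  show ?thesis using an bd by blast
qed

end
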